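(* Let $\Gamma$ be a finitely generated semigroup with identity $e$, $\rho:\Gamma\to\mathrm{End}(G)$ an endomorphism action with $\rho(e)=\mathrm{Id}$ on a solenoid $G$, and $A$ a $\rho$-basis of $\widehat G$. Then for every $C>0$ there exists $\epsilon>0$ such that $B_A(\epsilon)\subset E(B^*_A(C))$.
   Context: A solenoid is a compact connected finite-dimensional metrizable abelian group (dual $\widehat G$ torsion-free of finite rank). $L(G)$ is the real vector space of homomorphisms $\widehat G\to\mathbb R$. $E:L(G)\to G$ is the unique homomorphism with $\chi(E(p))=e^{2\pi i p(\chi)}$ for all $p\in L(G)$, $\chi\in\widehat G$. $\widehat\rho(\gamma)(\chi)=\chi\circ\rho(\gamma)$. A $\rho$-basis is a set $A\subset\widehat G$ generating $\widehat G$ as an abelian group with $A=\bigcup_{\gamma}\widehat\rho(\gamma)(F)$ for some finite $F\subset\widehat G$. With $\delta(z)=\inf\{|t|:e^{2\pi it}=z\}$ for $z\in\mathbb S^1$: $B_A(r)=\{g\in G:\sup_{\chi\in A}\delta(\chi(g))<r\}$ and $B^*_A(r)=\{p\in L(G):\sup_{\chi\in A}|p(\chi)|<r\}$. *)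

theory Defs
  imports "HOL-Analysis.Analysis"
begin

text \<open>We model the solenoid G through its (discrete) dual group \<open>'x\<close>:
  G is the group of all homomorphisms \<open>'x \<rightarrow> S^1\<close>, with the topology of
  pointwise convergence (product topology on \<open>'x \<Rightarrow> complex\<close>).
  By Pontryagin duality, every solenoid arises in this way from a torsion-free
  abelian group \<open>'x\<close> of finite rank, and its dual is identified with \<open>'x\<close>
  via evaluation \<open>c(g) = g c\<close>.\<close>

inductive_set agroup_span :: "'a::ab_group_add set \<Rightarrow> 'a set" for S where
  zero: "0 \<in> agroup_span S"
| gen: "s \<in> S \<Longrightarrow> s \<in> agroup_span S"
| add: "a \<in> agroup_span S \<Longrightarrow> b \<in> agroup_span S \<Longrightarrow> a + b \<in> agroup_span S"
| neg: "a \<in> agroup_span S \<Longrightarrow> - a \<in> agroup_span S"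

fun nsmul :: "nat \<Rightarrow> 'a::monoid_add \<Rightarrow> 'a" where
  "nsmul 0 x = 0"
| "nsmul (Suc n) x = x + nsmul n x"

definition torsion_free :: "'a::ab_group_add set \<Rightarrow> bool" where
  "torsion_free X \<longleftrightarrow> (\<forall>x\<in>X. \<forall>n>0. nsmul n x = 0 \<longrightarrow> x = 0)"

definition finite_rank :: "'a::ab_group_add set \<Rightarrow> bool" where
  "finite_rank X \<longleftrightarrow> (\<exists>S\<subseteq>X. finite S \<and> (\<forall>x\<in>X. \<exists>n>0. nsmul n x \<in> agroup_span S))"

definition dual_group :: "('x::ab_group_add \<Rightarrow> complex) set" where
  "dual_group = {g. (\<forall>x. norm (g x) = 1) \<and> (\<forall>x y. g (x + y) = g x * g y)}"

definition lie_alg :: "('x::ab_group_add \<Rightarrow> real) set" where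
  "lie_alg = {p. \<forall>x y. p (x + y) = p x + p y}"

definition expG :: "('x::ab_group_add \<Rightarrow> real) \<Rightarrow> 'x \<Rightarrow> complex" where
  "expG p = (\<lambda>c. cis (2 * pi * p c))"

definition delta_circ :: "complex \<Rightarrow> real" where
  "delta_circ z = Inf {\<bar>t\<bar> | t. cis (2 * pi * t) = z}"

definition ballA :: "'x::ab_group_add set \<Rightarrow> real \<Rightarrow> ('x \<Rightarrow> complex) set" where
  "ballA A r = {g \<in> dual_group. (SUP c\<in>A. ereal (delta_circ (g c))) < ereal r}"

definition ballA_star :: "'x::ab_group_add set \<Rightarrow> real \<Rightarrow> ('x \<Rightarrow> real) set" where
  "ballA_star A r = {p \<in> lie_alg. (SUP c\<in>A. ereal \<bar>p c\<bar>) < ereal r}"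

definition cont_end :: "(('x::ab_group_add \<Rightarrow> complex) \<Rightarrow> ('x \<Rightarrow> complex)) \<Rightarrow> bool" where
  "cont_end f \<longleftrightarrow> f ` dual_group \<subseteq> dual_group
     \<and> (\<forall>g\<in>dual_group. \<forall>h\<in>dual_group. f (\<lambda>c. g c * h c) = (\<lambda>c. f g c * f h c))
     \<and> continuous_on dual_group f"

text \<open>Dual endomorphism: \<widehat>f(c) = c \<circ> f, viewed as an element of 'x.\<close>
definition dual_end :: "(('x::ab_group_add \<Rightarrow> complex) \<Rightarrow> ('x \<Rightarrow> complex)) \<Rightarrow> 'x \<Rightarrow> 'x" where
  "dual_end f c = (THE y. \<forall>g\<in>dual_group. g y = f g c)"

inductive_set monoid_span :: "'m::monoid_mult set \<Rightarrow> 'm set" for S where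
  one: "1 \<in> monoid_span S"
| gen: "s \<in> S \<Longrightarrow> s \<in> monoid_span S"
| mult: "a \<in> monoid_span S \<Longrightarrow> b \<in> monoid_span S \<Longrightarrow> a * b \<in> monoid_span S"

definition finitely_generated_monoid :: "'m::monoid_mult set \<Rightarrow> bool" where
  "finitely_generated_monoid M \<longleftrightarrow> (\<exists>S. finite S \<and> S \<subseteq> M \<and> monoid_span S = M)"

definition endo_action :: "('m::monoid_mult \<Rightarrow> ('x::ab_group_add \<Rightarrow> complex) \<Rightarrow> ('x \<Rightarrow> complex)) \<Rightarrow> bool" where
  "endo_action \<rho> \<longleftrightarrow> (\<forall>\<gamma>. cont_end (\<rho> \<gamma>))
     \<and> (\<forall>\<gamma> \<delta>. \<forall>g\<in>dual_group. \<rho> (\<gamma> * \<delta>) g = \<rho> \<gamma> (\<rho> \<delta> g))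
     \<and> (\<forall>g\<in>dual_group. \<rho> 1 g = g)"

definition rho_basis :: "('m::monoid_mult \<Rightarrow> ('x::ab_group_add \<Rightarrow> complex) \<Rightarrow> ('x \<Rightarrow> complex)) \<Rightarrow> 'x set \<Rightarrow> bool" where
  "rho_basis \<rho> A \<longleftrightarrow> agroup_span A = UNIV
     \<and> (\<exists>F. finite F \<and> A = (\<Union>\<gamma>. dual_end (\<rho> \<gamma>) ` F))"

end

theory Submission
  imports Defs
begin


lemma nsmul_add: "nsmul (m + n) x = nsmul m x + nsmul n (x::'a::ab_group_add)"
  by (induction m) (auto simp: add.assoc)

lemma nsmul_zero[simp]: "nsmul n (0::'a::ab_group_add) = 0"
  by (induction n) auto

lemma nsmul_plus: "nsmul n (x + y) = nsmul n x + nsmul n (y::'a::ab_group_add)"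
  by (induction n) (auto simp: algebra_simps)

lemma nsmul_neg: "nsmul n (- x) = - nsmul n (x::'a::ab_group_add)"
  by (induction n) (auto simp: algebra_simps)

lemma nsmul_mult: "nsmul (m * n) x = nsmul m (nsmul n (x::'a::ab_group_add))"
  by (induction m) (auto simp: nsmul_add)

definition zsmul :: "int \<Rightarrow> 'a::ab_group_add \<Rightarrow> 'a" where
  "zsmul k x = (if 0 \<le> k then nsmul (nat k) x else - nsmul (nat (- k)) x)"

lemma zsmul_0[simp]: "zsmul 0 x = 0" by (simp add: zsmul_def)
lemma zsmul_1[simp]: "zsmul 1 x = x" by (simp add: zsmul_def)
lemma zsmul_of_nat: "zsmul (int n) x = nsmul n x" by (simp add: zsmul_def)

lemma zsmul_succ: "zsmul (k + 1) x = zsmul k x + x"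
proof (cases "0 \<le> k")
  case True
  then have "nat (k+1) = Suc (nat k)" by simp
  then show ?thesis using True by (simp add: zsmul_def add.commute)
next
  case False
  show ?thesis
  proof (cases "k = -1")
    case True then show ?thesis by (simp add: zsmul_def)
  next
    case F: False
    with False have "nat (-k) = Suc (nat (- (k+1)))" by simp
    then show ?thesis using False F by (simp add: zsmul_def algebra_simps)
  qed
qed

lemma zsmul_pred: "zsmul (k - 1) x = zsmul k x - x"
  using zsmul_succ[of "k - 1" x] by simp

lemma zsmul_add: "zsmul (k + l) x = zsmul k x + zsmul l (x::'a::ab_group_add)"
proof (induction l rule: int_induct[where k=0])
  case base then show ?case by simp
next
  case (step1 i)
  have "zsmul (k + (i + 1)) x = zsmul (k + i) x + x" using zsmul_succ[of "k+i" x] by (simp add: add.assoc)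
  also have "\<dots> = zsmul k x + zsmul (i+1) x" using step1 zsmul_succ[of i x] by (simp add: algebra_simps)
  finally show ?case .
next
  case (step2 i)
  have "zsmul (k + (i - 1)) x = zsmul (k + i) x - x" using zsmul_pred[of "k+i" x] by (simp add: algebra_simps)
  also have "\<dots> = zsmul k x + zsmul (i - 1) x" using step2 zsmul_pred[of i x] by (simp add: algebra_simps)
  finally show ?case .
qed

lemma zsmul_uminus: "zsmul (- k) x = - zsmul k (x::'a::ab_group_add)"
  using zsmul_add[of k "-k" x] by (simp add: eq_neg_iff_add_eq_0 add.commute)

lemma zsmul_diff: "zsmul (k - l) x = zsmul k x - zsmul l (x::'a::ab_group_add)"
  using zsmul_add[of k "-l" x] by (simp add: zsmul_uminus)

lemma zsmul_plus: "zsmul k (x + y) = zsmul k x + zsmul k (y::'a::ab_group_add)"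
  by (simp add: zsmul_def nsmul_plus)

lemma zsmul_neg: "zsmul k (- x) = - zsmul k (x::'a::ab_group_add)"
  by (simp add: zsmul_def nsmul_neg)

lemma zsmul_minus: "zsmul k (x - y) = zsmul k x - zsmul k (y::'a::ab_group_add)"
  using zsmul_plus[of k x "-y"] by (simp add: zsmul_neg)

lemma zsmul_zero[simp]: "zsmul k (0::'a::ab_group_add) = 0"
  by (simp add: zsmul_def)

lemma zsmul_mult: "zsmul (k * l) x = zsmul k (zsmul l (x::'a::ab_group_add))"
proof (induction k rule: int_induct[where k=0])
  case base then show ?case by simp
next
  case (step1 i)
  then show ?case by (simp add: distrib_right zsmul_add)
next
  case (step2 i)
  then show ?case by (simp add: left_diff_distrib zsmul_diff)
qed

lemma zsmul_sum: "zsmul k (sum f B) = (\<Sum>b\<in>B. zsmul k (f b :: 'a::ab_group_add))"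
  by (induction B rule: infinite_finite_induct) (auto simp: zsmul_plus)

lemma sum_zsmul: "zsmul (sum f B) x = (\<Sum>b\<in>B. zsmul (f b) (x :: 'a::ab_group_add))"
  by (induction B rule: infinite_finite_induct) (auto simp: zsmul_add)

definition zsub :: "'a::ab_group_add set \<Rightarrow> bool" where
  "zsub H \<longleftrightarrow> 0 \<in> H \<and> (\<forall>x\<in>H. \<forall>y\<in>H. x + y \<in> H) \<and> (\<forall>x\<in>H. - x \<in> H)"

lemma zsubD: assumes "zsub H"
  shows "0 \<in> H" "x \<in> H \<Longrightarrow> y \<in> H \<Longrightarrow> x + y \<in> H" "x \<in> H \<Longrightarrow> - x \<in> H"
  using assms by (auto simp: zsub_def)

lemma zsub_diff: "zsub H \<Longrightarrow> x \<in> H \<Longrightarrow> y \<in> H \<Longrightarrow> x - y \<in> H"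
  using zsubD[of H] by (metis diff_conv_add_uminus)

lemma zsub_nsmul: "zsub H \<Longrightarrow> x \<in> H \<Longrightarrow> nsmul n x \<in> H"
  by (induction n) (auto dest: zsubD)

lemma zsub_zsmul: "zsub H \<Longrightarrow> x \<in> H \<Longrightarrow> zsmul k x \<in> H"
  using zsub_nsmul[of H x] zsubD(3)[of H] by (simp add: zsmul_def)

lemma zsub_sum: "zsub H \<Longrightarrow> (\<And>b. b \<in> B \<Longrightarrow> f b \<in> H) \<Longrightarrow> sum f B \<in> H"
  by (induction B rule: infinite_finite_induct) (simp_all add: zsubD(1) zsubD(2))

lemma zsub_agroup_span: "zsub H \<Longrightarrow> S \<subseteq> H \<Longrightarrow> agroup_span S \<subseteq> H"
proof
  fix x assume a: "zsub H" "S \<subseteq> H" and "x \<in> agroup_span S"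
  from this(3) show "x \<in> H" using a by (induction x rule: agroup_span.induct) (auto simp: zsubD(1) zsubD(2) zsubD(3))
qed

definition zcomb :: "'a::ab_group_add set \<Rightarrow> ('a \<Rightarrow> int) \<Rightarrow> 'a" where
  "zcomb B m = (\<Sum>b\<in>B. zsmul (m b) b)"

definition zspan :: "'a::ab_group_add set \<Rightarrow> 'a set" where
  "zspan B = range (zcomb B)"

definition indep :: "'a::ab_group_add set \<Rightarrow> bool" where
  "indep B \<longleftrightarrow> finite B \<and> (\<forall>m. zcomb B m = 0 \<longrightarrow> (\<forall>b\<in>B. m b = 0))"

definition rspan :: "'a::ab_group_add set \<Rightarrow> 'a set" where
  "rspan B = {x. \<exists>n>0. zsmul n x \<in> zspan B}"

lemma zcomb_in_zsub: "zsub H \<Longrightarrow> B \<subseteq> H \<Longrightarrow> zcomb B m \<in> H"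
  unfolding zcomb_def by (rule zsub_sum) (simp_all add: subset_iff zsub_zsmul)

lemma zspan_sub: "zsub H \<Longrightarrow> B \<subseteq> H \<Longrightarrow> zspan B \<subseteq> H"
  unfolding zspan_def using zcomb_in_zsub by blast

lemma zcomb_add: "zcomb B m + zcomb B m' = zcomb B (\<lambda>b. m b + m' b)"
  by (simp add: zcomb_def zsmul_add sum.distrib)

lemma zcomb_neg: "- zcomb B m = zcomb B (\<lambda>b. - m b)"
  by (simp add: zcomb_def zsmul_uminus sum_negf)

lemma zcomb_diff: "zcomb B m - zcomb B m' = zcomb B (\<lambda>b. m b - m' b)"
  by (simp add: zcomb_def zsmul_diff sum_subtractf)

lemma zcomb_zsmul: "zsmul k (zcomb B m) = zcomb B (\<lambda>b. k * m b)"
  by (simp add: zcomb_def zsmul_sum zsmul_mult)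

lemma zcomb_cong: "(\<And>b. b \<in> B \<Longrightarrow> m b = m' b) \<Longrightarrow> zcomb B m = zcomb B m'"
  by (simp add: zcomb_def)

lemma zcomb_zero[simp]: "zcomb B (\<lambda>_. 0) = 0"
  by (simp add: zcomb_def)

lemma zcomb_delta: assumes "finite B" "s \<in> B" shows "zcomb B (\<lambda>b. if b = s then 1 else 0) = s"
proof -
  have "zcomb B (\<lambda>b. if b = s then 1 else 0) = (\<Sum>b\<in>B. if b = s then b else 0)"
    unfolding zcomb_def by (rule sum.cong) auto
  then show ?thesis using sum.delta[OF \<open>finite B\<close>, of s "\<lambda>b. b"] \<open>s\<in>B\<close> by simp
qed

lemma zcomb_insert: "finite B \<Longrightarrow> a \<notin> B \<Longrightarrow> zcomb (insert a B) m = zsmul (m a) a + zcomb B m"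
  by (simp add: zcomb_def)

lemma zcomb_mono: "finite C \<Longrightarrow> B \<subseteq> C \<Longrightarrow> zcomb B m = zcomb C (\<lambda>b. if b \<in> B then m b else 0)"
  unfolding zcomb_def by (rule sum.mono_neutral_cong_left) auto

lemma zspan_mono: "finite C \<Longrightarrow> B \<subseteq> C \<Longrightarrow> zspan B \<subseteq> zspan C"
  unfolding zspan_def using zcomb_mono by blast

lemma zsub_zspan: "zsub (zspan B)"
  unfolding zsub_def zspan_def
  by (auto simp: zcomb_add zcomb_neg) (metis zcomb_zero rangeI)

lemma zspan_in: "finite B \<Longrightarrow> s \<in> B \<Longrightarrow> s \<in> zspan B"
  unfolding zspan_def using zcomb_delta by (metis rangeI)

lemma zsub_rspan: "zsub (rspan B)"
proof -
  have Z: "zsub (zspan B)" by (rule zsub_zspan)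
  have 1: "0 \<in> rspan B" unfolding rspan_def
  proof
    have "zsmul 1 0 \<in> zspan B" using zsubD(1)[OF Z] by simp
    then show "\<exists>n>0. zsmul n 0 \<in> zspan B" by (intro exI[of _ 1]) simp
  qed
  have 2: "x + y \<in> rspan B" if xy: "x \<in> rspan B" "y \<in> rspan B" for x y
  proof -
    obtain n where n: "n > 0" "zsmul n x \<in> zspan B" using xy(1) unfolding rspan_def by blast
    obtain n' where n': "n' > 0" "zsmul n' y \<in> zspan B" using xy(2) unfolding rspan_def by blast
    have e: "zsmul (n'*n) y = zsmul n (zsmul n' y)" by (subst mult.commute) (rule zsmul_mult)
    have "zsmul (n' * n) (x + y) = zsmul (n'*n) x + zsmul (n'*n) y" by (rule zsmul_plus)
    also have "\<dots> = zsmul n' (zsmul n x) + zsmul n (zsmul n' y)" by (simp only: e zsmul_mult[of n' n x])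
    also have "\<dots> \<in> zspan B" by (rule zsubD(2)[OF Z zsub_zsmul[OF Z n(2)] zsub_zsmul[OF Z n'(2)]])
    finally have "zsmul (n' * n) (x + y) \<in> zspan B" .
    moreover have "n' * n > 0" using n n' by simp
    ultimately show ?thesis unfolding rspan_def by blast
  qed
  have 3: "- x \<in> rspan B" if xr: "x \<in> rspan B" for x
  proof -
    obtain n where n: "n > 0" "zsmul n x \<in> zspan B" using xr unfolding rspan_def by blast
    then have "zsmul n (- x) \<in> zspan B" using zsubD(3)[OF Z n(2)] by (simp add: zsmul_neg)
    then show ?thesis using n unfolding rspan_def by blast
  qed
  show ?thesis unfolding zsub_def using 1 2 3 by blast
qed

lemma zspan_rspan: "zspan B \<subseteq> rspan B"
  unfolding rspan_def by (auto intro: exI[of _ 1])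

lemma rspan_div: "n > 0 \<Longrightarrow> zsmul n x \<in> rspan B \<Longrightarrow> x \<in> rspan B"
  unfolding rspan_def by (auto simp: zsmul_mult[symmetric] intro: mult_pos_pos)

lemma rspan_trans: assumes "C \<subseteq> rspan B" shows "rspan C \<subseteq> rspan B"
proof
  fix x assume x: "x \<in> rspan C"
  then obtain n where n: "n > 0" "zsmul n x \<in> zspan C" unfolding rspan_def by blast
  have "zspan C \<subseteq> rspan B" using zspan_sub[OF zsub_rspan assms] .
  then have "zsmul n x \<in> rspan B" using n(2) by blast
  then show "x \<in> rspan B" by (rule rspan_div[OF n(1)])
qed



lemma zero_zspan: "0 \<in> zspan B"
  using zsubD(1)[OF zsub_zspan] .

lemma agroup_span_fin:
  assumes "x \<in> agroup_span A" shows "\<exists>B. finite B \<and> B \<subseteq> A \<and> x \<in> zspan B"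
  using assms
proof (induction x rule: agroup_span.induct)
  case zero
  then show ?case using zero_zspan[of "{}"] by blast
next
  case (gen s)
  then show ?case using zspan_in[of "{s}" s] by blast
next
  case (add a b)
  then obtain B1 B2 where B: "finite B1" "B1 \<subseteq> A" "a \<in> zspan B1" "finite B2" "B2 \<subseteq> A" "b \<in> zspan B2"
    by blast
  have "a \<in> zspan (B1 \<union> B2)" using zspan_mono[of "B1 \<union> B2" B1] B by blast
  moreover have "b \<in> zspan (B1 \<union> B2)" using zspan_mono[of "B1 \<union> B2" B2] B by blast
  ultimately have "a + b \<in> zspan (B1 \<union> B2)" by (rule zsubD(2)[OF zsub_zspan])
  then show ?case using B by blast
next
  case (neg a)
  then obtain B where B: "finite B" "B \<subseteq> A" "a \<in> zspan B" by blast
  then show ?case using zsubD(3)[OF zsub_zspan B(3)] by blast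
qed

lemma finite_sub_zspan:
  assumes "finite S0" "S0 \<subseteq> agroup_span A"
  shows "\<exists>B. finite B \<and> B \<subseteq> A \<and> S0 \<subseteq> zspan B"
  using assms
proof (induction S0 rule: finite_induct)
  case empty then show ?case by blast
next
  case (insert a S0)
  have "S0 \<subseteq> agroup_span A" using insert.prems by blast
  then obtain B where B: "finite B" "B \<subseteq> A" "S0 \<subseteq> zspan B" using insert.IH by blast
  have "a \<in> agroup_span A" using insert.prems by blast
  then obtain B' where B': "finite B'" "B' \<subseteq> A" "a \<in> zspan B'" using agroup_span_fin by blast
  have "zspan B \<subseteq> zspan (B \<union> B')" "zspan B' \<subseteq> zspan (B \<union> B')"
    using zspan_mono[of "B \<union> B'" B] zspan_mono[of "B \<union> B'" B'] B(1) B'(1) by auto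
  then have "insert a S0 \<subseteq> zspan (B \<union> B')" using B(3) B'(3) by blast
  then show ?case using B(1,2) B'(1,2) by (intro exI[of _ "B \<union> B'"]) simp
qed

lemma rspan_mono: "finite C \<Longrightarrow> B \<subseteq> C \<Longrightarrow> rspan B \<subseteq> rspan C"
  unfolding rspan_def using zspan_mono by blast

lemma indep_empty: "indep {}"
  by (simp add: indep_def)

lemma indep_extract:
  assumes "finite S0" shows "\<exists>S\<subseteq>S0. indep S \<and> S0 \<subseteq> rspan S"
  using assms
proof (induction S0 rule: finite_induct)
  case empty then show ?case using indep_empty by blast
next
  case (insert a S0)
  then obtain S where S: "S \<subseteq> S0" "indep S" "S0 \<subseteq> rspan S" by blast
  have fS: "finite S" using S(2) by (simp add: indep_def)
  have aS: "a \<notin> S" using S(1) insert.hyps(2) by blast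
  show ?case
  proof (cases "indep (insert a S)")
    case True
    have "rspan S \<subseteq> rspan (insert a S)" using rspan_mono[of "insert a S" S] fS by blast
    moreover have "a \<in> rspan (insert a S)" using zspan_in[of "insert a S" a] fS zspan_rspan by blast
    ultimately show ?thesis using True S by (intro exI[of _ "insert a S"]) auto
  next
    case False
    then obtain m b where m: "zcomb (insert a S) m = 0" "b \<in> insert a S" "m b \<noteq> 0"
      using fS by (auto simp: indep_def)
    have eq: "zsmul (m a) a + zcomb S m = 0" using m(1) zcomb_insert[OF fS aS] by simp
    have ma: "m a \<noteq> 0"
    proof
      assume "m a = 0"
      then have "zcomb S m = 0" using eq by simp
      then have "\<forall>b\<in>S. m b = 0" using S(2) by (simp add: indep_def)
      then show False using m(2,3) \<open>m a = 0\<close> by auto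
    qed
    have z1: "zsmul (m a) a = zcomb S (\<lambda>b. - m b)" using eq zcomb_neg[of S m]
      by (metis eq_neg_iff_add_eq_0)
    have "zsmul (m a) a \<in> zspan S" unfolding z1 zspan_def by blast
    then have z2: "zsmul (- m a) a \<in> zspan S" using zsubD(3)[OF zsub_zspan] by (simp add: zsmul_uminus)
    have "zsmul \<bar>m a\<bar> a \<in> zspan S"
      using \<open>zsmul (m a) a \<in> zspan S\<close> z2 by (cases "m a \<ge> 0") auto
    then have "a \<in> rspan S" unfolding rspan_def using ma by (intro CollectI exI[of _ "\<bar>m a\<bar>"]) auto
    then show ?thesis using S by (intro exI[of _ S]) auto
  qed
qed

lemma lie_algD: "p \<in> lie_alg \<Longrightarrow> p (x + y) = p x + p y"
  by (simp add: lie_alg_def)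

lemma additive_zero: "p \<in> lie_alg \<Longrightarrow> p 0 = 0"
  using lie_algD[of p 0 0] by simp

lemma additive_neg: "p \<in> lie_alg \<Longrightarrow> p (- x) = - p x"
  using lie_algD[of p x "-x"] additive_zero[of p] by simp

lemma additive_nsmul: "p \<in> lie_alg \<Longrightarrow> p (nsmul n x) = real n * p x"
  by (induction n) (auto simp: lie_algD additive_zero algebra_simps)

lemma additive_zsmul: "p \<in> lie_alg \<Longrightarrow> p (zsmul k x) = real_of_int k * p x"
  by (auto simp: zsmul_def additive_nsmul additive_neg)

lemma additive_sum: "p \<in> lie_alg \<Longrightarrow> p (sum f B) = (\<Sum>b\<in>B. p (f b))"
  by (induction B rule: infinite_finite_induct) (auto simp: lie_algD additive_zero)

lemma additive_zcomb: "p \<in> lie_alg \<Longrightarrow> p (zcomb B m) = (\<Sum>b\<in>B. real_of_int (m b) * p b)"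
  by (simp add: zcomb_def additive_sum additive_zsmul)

lemma additive_unique:
  assumes "rspan S = UNIV" "p \<in> lie_alg" "q \<in> lie_alg" "\<And>s. s \<in> S \<Longrightarrow> p s = q s"
  shows "p x = q x"
proof -
  obtain n m where n: "n > 0" "zsmul n x = zcomb S m"
    using assms(1) unfolding rspan_def zspan_def by blast
  have "real_of_int n * p x = real_of_int n * q x"
    using arg_cong[OF n(2), of p] arg_cong[OF n(2), of q] assms(2-4)
    by (simp add: additive_zsmul additive_zcomb)
  then show ?thesis using n(1) by simp
qed

definition rep :: "'a::ab_group_add set \<Rightarrow> 'a \<Rightarrow> int \<times> ('a \<Rightarrow> int)" where
  "rep S x = (SOME nm. fst nm > 0 \<and> zsmul (fst nm) x = zcomb S (snd nm))"

definition ext :: "'a::ab_group_add set \<Rightarrow> ('a \<Rightarrow> real) \<Rightarrow> 'a \<Rightarrow> real" where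
  "ext S r x = (\<Sum>b\<in>S. real_of_int (snd (rep S x) b) * r b) / real_of_int (fst (rep S x))"

lemma indep_coeff_unique:
  assumes "indep S" "n > 0" "zsmul n x = zcomb S m" "n' > 0" "zsmul n' x = zcomb S m'" "b \<in> S"
  shows "n' * m b = n * m' b"
proof -
  have "zcomb S (\<lambda>b. n' * m b) = zsmul n' (zsmul n x)" using assms(3) by (simp add: zcomb_zsmul)
  also have "\<dots> = zsmul n (zsmul n' x)" by (metis mult.commute zsmul_mult)
  also have "\<dots> = zcomb S (\<lambda>b. n * m' b)" using assms(5) by (simp add: zcomb_zsmul)
  finally have "zcomb S (\<lambda>b. n' * m b - n * m' b) = 0" by (simp add: zcomb_diff[symmetric])
  then show ?thesis using assms(1,6) by (auto simp: indep_def)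
qed

lemma ext_rep:
  assumes "indep S" "n > 0" "zsmul n x = zcomb S m"
  shows "ext S r x = (\<Sum>b\<in>S. real_of_int (m b) * r b) / real_of_int n"
proof -
  have ex: "\<exists>nm. fst nm > 0 \<and> zsmul (fst nm) x = zcomb S (snd nm)"
    using assms by (intro exI[of _ "(n, m)"]) auto
  define n' where "n' = fst (rep S x)"
  define m' where "m' = snd (rep S x)"
  have r: "n' > 0" "zsmul n' x = zcomb S m'"
    using someI_ex[OF ex] unfolding n'_def m'_def rep_def by auto
  have c: "\<And>b. b \<in> S \<Longrightarrow> n * m' b = n' * m b"
    using indep_coeff_unique[OF assms(1) r assms(2,3)] .
  have "real_of_int n * (\<Sum>b\<in>S. real_of_int (m' b) * r b) = real_of_int n' * (\<Sum>b\<in>S. real_of_int (m b) * r b)"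
    unfolding sum_distrib_left
  proof (rule sum.cong)
    fix b assume "b \<in> S"
    then have "real_of_int (n * m' b) = real_of_int (n' * m b)" using c by simp
    then show "real_of_int n * (real_of_int (m' b) * r b) = real_of_int n' * (real_of_int (m b) * r b)"
      by (simp only: of_int_mult mult.assoc[symmetric])
  qed simp
  then show ?thesis using r(1) assms(2) unfolding ext_def n'_def[symmetric] m'_def[symmetric]
    by (simp add: field_simps)
qed

lemma ext_additive:
  assumes "indep S" "rspan S = UNIV" shows "ext S r \<in> lie_alg"
  unfolding lie_alg_def
proof (intro CollectI allI)
  fix x y
  obtain n m where n: "n > 0" "zsmul n x = zcomb S m"
    using assms(2) unfolding rspan_def zspan_def by blast
  obtain n' m' where n': "n' > 0" "zsmul n' y = zcomb S m'"
    using assms(2) unfolding rspan_def zspan_def by blast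
  have e: "zsmul (n * n') (x + y) = zcomb S (\<lambda>b. n' * m b + n * m' b)"
  proof -
    have "zsmul (n * n') (x + y) = zsmul n' (zsmul n x) + zsmul n (zsmul n' y)"
      by (simp only: zsmul_plus zsmul_mult[symmetric] mult.commute)
    also have "\<dots> = zcomb S (\<lambda>b. n' * m b) + zcomb S (\<lambda>b. n * m' b)"
      by (simp only: n(2) n'(2) zcomb_zsmul)
    finally show ?thesis by (simp only: zcomb_add)
  qed
  have "ext S r (x + y) = (\<Sum>b\<in>S. real_of_int (n' * m b + n * m' b) * r b) / real_of_int (n * n')"
    using ext_rep[OF assms(1) _ e] n n' by simp
  also have "\<dots> = (\<Sum>b\<in>S. real_of_int (m b) * r b) / real_of_int n + (\<Sum>b\<in>S. real_of_int (m' b) * r b) / real_of_int n'"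
    using n(1) n'(1) by (simp add: field_simps sum.distrib sum_distrib_left sum_divide_distrib)
  also have "\<dots> = ext S r x + ext S r y"
    using ext_rep[OF assms(1) n] ext_rep[OF assms(1) n'] by simp
  finally show "ext S r (x + y) = ext S r x + ext S r y" .
qed

lemma sum_delta_r: "finite S \<Longrightarrow> s \<in> S \<Longrightarrow> (\<Sum>b\<in>S. f b * (if b = s then 1 else 0)) = (f s :: real)"
proof -
  assume "finite S" "s \<in> S"
  have "(\<Sum>b\<in>S. f b * (if b = s then 1 else 0)) = (\<Sum>b\<in>S. if b = s then f b else 0)"
    by (rule sum.cong) auto
  then show ?thesis using \<open>finite S\<close> \<open>s \<in> S\<close> by simp
qed

lemma sum_delta_l: "finite S \<Longrightarrow> s \<in> S \<Longrightarrow> (\<Sum>b\<in>S. real_of_int (if b = s then 1 else 0) * f b) = (f s :: real)"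
proof -
  assume "finite S" "s \<in> S"
  have "(\<Sum>b\<in>S. real_of_int (if b = s then 1 else 0) * f b) = (\<Sum>b\<in>S. if b = s then f b else 0)"
    by (rule sum.cong) auto
  then show ?thesis using \<open>finite S\<close> \<open>s \<in> S\<close> by simp
qed

lemma ext_basis:
  assumes "indep S" "s \<in> S" shows "ext S r s = r s"
proof -
  have fS: "finite S" using assms(1) by (simp add: indep_def)
  have z: "zsmul 1 s = zcomb S (\<lambda>b. if b = s then 1 else 0)" using zcomb_delta[OF fS assms(2)] by simp
  have "ext S r s = (\<Sum>b\<in>S. real_of_int (if b = s then 1 else 0) * r b) / real_of_int 1"
    using ext_rep[OF assms(1) _ z, of r] by simp
  also have "\<dots> = r s" using sum_delta_l[OF fS assms(2)] by simp
  finally show ?thesis .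
qed

lemma ext_linear:
  assumes "indep S" "rspan S = UNIV"
  shows "ext S r x = (\<Sum>s\<in>S. r s * ext S (\<lambda>b. if b = s then 1 else 0) x)"
proof -
  have fS: "finite S" using assms(1) by (simp add: indep_def)
  obtain n m where n: "n > 0" "zsmul n x = zcomb S m"
    using assms(2) unfolding rspan_def zspan_def by blast
  have "(\<Sum>s\<in>S. r s * ext S (\<lambda>b. if b = s then 1 else 0) x)
      = (\<Sum>s\<in>S. r s * ((\<Sum>b\<in>S. real_of_int (m b) * (if b = s then 1 else 0)) / real_of_int n))"
    using ext_rep[OF assms(1) n] by simp
  also have "\<dots> = (\<Sum>s\<in>S. r s * (real_of_int (m s) / real_of_int n))"
    using fS by (intro sum.cong refl) (simp add: sum_delta_r)
  also have "\<dots> = ext S r x"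
    using ext_rep[OF assms(1) n] by (simp add: sum_divide_distrib mult.commute)
  finally show ?thesis by simp
qed



lemma dgD: assumes "g \<in> dual_group"
  shows "norm (g x) = 1" "g (x + y) = g x * g y"
  using assms by (auto simp: dual_group_def)

lemma dg_nz: "g \<in> dual_group \<Longrightarrow> g x \<noteq> 0"
  using dgD(1)[of g x] by auto

lemma dg_zero: assumes "g \<in> dual_group" shows "g 0 = 1"
proof -
  have "g 0 = g 0 * g 0" using dgD(2)[OF assms, of 0 0] by simp
  then show ?thesis using dg_nz[OF assms, of 0] by simp
qed

lemma dg_neg: assumes "g \<in> dual_group" shows "g (- x) = inverse (g x)"
proof -
  have "g x * g (- x) = 1" using dgD(2)[OF assms, of x "-x"] dg_zero[OF assms] by simp
  then show ?thesis using dg_nz[OF assms, of x] by (simp add: field_simps)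
qed

lemma dg_nsmul: "g \<in> dual_group \<Longrightarrow> g (nsmul n x) = g x ^ n"
  by (induction n) (auto simp: dg_zero dgD(2))

lemma dg_cis_zsmul:
  assumes "g \<in> dual_group" "g x = cis (2 * pi * t)"
  shows "g (zsmul k x) = cis (2 * pi * (of_int k * t))"
proof (cases "0 \<le> k")
  case True
  then show ?thesis using assms
    by (simp add: zsmul_def dg_nsmul Complex.DeMoivre mult_ac)
next
  case False
  then have "g (zsmul k x) = inverse (cis (2 * pi * t) ^ nat (- k))"
    using assms by (simp add: zsmul_def dg_neg dg_nsmul)
  also have "\<dots> = cis (2 * pi * (of_int k * t))" using False
    by (simp add: Complex.DeMoivre mult_ac)
  finally show ?thesis .
qed

lemma dg_sum: "g \<in> dual_group \<Longrightarrow> g (sum f B) = (\<Prod>b\<in>B. g (f b))"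
  by (induction B rule: infinite_finite_induct) (auto simp: dg_zero dgD(2))

lemma cis_sum: "(\<Prod>b\<in>B. cis (f b)) = cis (sum f B)"
  by (induction B rule: infinite_finite_induct) (auto simp: cis_mult)

lemma dg_zcomb:
  assumes "g \<in> dual_group" "\<And>b. b \<in> B \<Longrightarrow> g b = cis (2 * pi * r b)"
  shows "g (zcomb B m) = cis (2 * pi * (\<Sum>b\<in>B. of_int (m b) * r b))"
proof -
  have "g (zcomb B m) = (\<Prod>b\<in>B. cis (2 * pi * (of_int (m b) * r b)))"
    unfolding zcomb_def dg_sum[OF assms(1)] using dg_cis_zsmul[OF assms(1) assms(2)] by simp
  also have "\<dots> = cis (2 * pi * (\<Sum>b\<in>B. of_int (m b) * r b))"
    by (simp add: cis_sum sum_distrib_left)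
  finally show ?thesis .
qed

lemma expG_in: "p \<in> lie_alg \<Longrightarrow> expG p \<in> dual_group"
  by (auto simp: dual_group_def expG_def lie_algD distrib_left cis_mult)

lemma dg_mult: "g \<in> dual_group \<Longrightarrow> h \<in> dual_group \<Longrightarrow> (\<lambda>c. g c * h c) \<in> dual_group"
  by (auto simp: dual_group_def norm_mult)

lemma dg_one: "(\<lambda>c. 1) \<in> dual_group"
  by (auto simp: dual_group_def)

lemma dg_cnj: "g \<in> dual_group \<Longrightarrow> (\<lambda>c. cnj (g c)) \<in> dual_group"
  by (auto simp: dual_group_def)

lemma dg_pow: "g \<in> dual_group \<Longrightarrow> (\<lambda>c. g c ^ n) \<in> dual_group"
  by (auto simp: dual_group_def norm_power power_mult_distrib)

lemma dg_cnj_mult: "g \<in> dual_group \<Longrightarrow> cnj (g x) * g x = 1"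
proof -
  assume "g \<in> dual_group"
  then have "norm (g x) = 1" by (rule dgD(1))
  then show ?thesis using complex_norm_square[of "g x"] by (simp add: mult.commute)
qed

lemma dg_eq_zsub: assumes "g \<in> dual_group" "h \<in> dual_group" shows "zsub {x. g x = h x}"
  unfolding zsub_def using assms by (auto simp: dg_zero dgD(2) dg_neg)

lemma dg_eq_agroup_span:
  assumes "g \<in> dual_group" "h \<in> dual_group" "\<And>a. a \<in> A \<Longrightarrow> g a = h a" "agroup_span A = UNIV"
  shows "g = h"
proof
  fix x
  have "agroup_span A \<subseteq> {x. g x = h x}" using zsub_agroup_span[OF dg_eq_zsub[OF assms(1,2)]] assms(3) by blast
  then show "g x = h x" using assms(4) by blast
qed

definition tau :: "complex \<Rightarrow> real" where
  "tau z = Arg z / (2 * pi)"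

lemma cis_tau: "norm z = 1 \<Longrightarrow> cis (2 * pi * tau z) = z"
proof -
  assume a: "norm z = 1"
  then have "z \<noteq> 0" by auto
  then show ?thesis unfolding tau_def using cis_Arg[of z] a by (simp add: sgn_div_norm)
qed

lemma tau_bound: "\<bar>tau z\<bar> \<le> 1/2"
  unfolding tau_def using Arg_bounded[of z] by (auto simp: abs_le_iff field_simps)

lemma cis_eq_int:
  assumes "cis (2 * pi * a) = cis (2 * pi * b)" shows "a - b \<in> \<int>"
proof -
  from assms have "exp (\<i> * complex_of_real (2*pi*a)) = exp (\<i> * complex_of_real (2*pi*b))"
    by (simp add: cis_conv_exp)
  then obtain n :: int where e: "\<i> * complex_of_real (2*pi*a) = \<i> * complex_of_real (2*pi*b) + (of_int (2 * n) * pi) * \<i>"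
    using exp_eq by blast
  have "Im (\<i> * complex_of_real (2*pi*a)) = Im (\<i> * complex_of_real (2*pi*b) + (of_int (2 * n) * pi) * \<i>)"
    using e by simp
  then have "2 * pi * a = 2 * pi * b + 2 * of_int n * pi" by simp
  then have "2 * pi * (a - b - of_int n) = 0" by (simp add: algebra_simps)
  then have "a - b = of_int n" by simp
  then show ?thesis by simp
qed

lemma cis_lift_exists: "norm z = 1 \<Longrightarrow> \<exists>t. cis (2 * pi * t) = z"
  using cis_tau by blast

lemma delta_circ_tau:
  assumes "norm z = 1" shows "delta_circ z = \<bar>tau z\<bar>"
  unfolding delta_circ_def
proof (rule cInf_eq_minimum)
  show "\<bar>tau z\<bar> \<in> {\<bar>t\<bar> |t. cis (2 * pi * t) = z}" using cis_tau[OF assms] by blast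
next
  fix x assume "x \<in> {\<bar>t\<bar> |t. cis (2 * pi * t) = z}"
  then obtain t where t: "x = \<bar>t\<bar>" "cis (2 * pi * t) = z" by blast
  have "t - tau z \<in> \<int>" using cis_eq_int t(2) cis_tau[OF assms] by simp
  then obtain n where n: "t - tau z = of_int n" by (metis Ints_cases)
  have b: "\<bar>tau z\<bar> \<le> 1/2" by (rule tau_bound)
  show "\<bar>tau z\<bar> \<le> x"
  proof (cases "n = 0")
    case True then show ?thesis using n t(1) by simp
  next
    case False
    then have "\<bar>real_of_int n\<bar> \<ge> 1" by linarith
    then show ?thesis using n t(1) b by linarith
  qed
qed

lemma int_small_zero: assumes "(x::real) \<in> \<int>" "\<bar>x\<bar> < 1" shows "x = 0"
proof -
  obtain n where n: "x = of_int n" using assms(1) by (metis Ints_cases)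
  then have "\<bar>n\<bar> < 1" using assms(2) by linarith
  then show ?thesis using n by simp
qed



section \<open>Free bases of finitely generated subgroups\<close>

lemma indep_coeff_eq:
  assumes "indep S" "zcomb S m = zcomb S m'" "b \<in> S" shows "m b = m' b"
proof -
  have "zcomb S (\<lambda>b. m b - m' b) = 0" using assms(2) by (simp add: zcomb_diff[symmetric])
  then show ?thesis using assms(1,3) by (auto simp: indep_def)
qed

lemma addH_zero: "zsub H \<Longrightarrow> (\<forall>x\<in>H. \<forall>y\<in>H. f (x + y) = f x + (f y :: int)) \<Longrightarrow> f 0 = 0"
  using zsubD(1) by fastforce

lemma addH_neg: assumes "zsub H" "\<forall>x\<in>H. \<forall>y\<in>H. f (x + y) = f x + (f y :: int)" "x \<in> H"
  shows "f (- x) = - f x"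
proof -
  have "f (x + - x) = f x + f (- x)" using assms zsubD(3)[OF assms(1,3)] by blast
  then show ?thesis using addH_zero[OF assms(1,2)] by simp
qed

lemma addH_nsmul: assumes "zsub H" "\<forall>x\<in>H. \<forall>y\<in>H. f (x + y) = f x + (f y :: int)" "x \<in> H"
  shows "f (nsmul n x) = int n * f x"
proof (induction n)
  case 0 then show ?case using addH_zero[OF assms(1,2)] by simp
next
  case (Suc n)
  have "f (x + nsmul n x) = f x + f (nsmul n x)" using assms zsub_nsmul[OF assms(1,3)] by blast
  then show ?case using Suc by (simp add: algebra_simps)
qed

lemma addH_zsmul: assumes "zsub H" "\<forall>x\<in>H. \<forall>y\<in>H. f (x + y) = f x + (f y :: int)" "x \<in> H"
  shows "f (zsmul k x) = k * f x"
proof (cases "0 \<le> k")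
  case True then show ?thesis using addH_nsmul[OF assms] by (simp add: zsmul_def)
next
  case False
  have "f (- nsmul (nat (- k)) x) = - f (nsmul (nat (- k)) x)"
    using addH_neg[OF assms(1,2) zsub_nsmul[OF assms(1,3)]] .
  then show ?thesis using False addH_nsmul[OF assms] by (simp add: zsmul_def)
qed

lemma free_sub:
  fixes c :: "nat \<Rightarrow> 'a::ab_group_add \<Rightarrow> int"
  assumes "zsub H" "\<forall>i<d. \<forall>x\<in>H. \<forall>y\<in>H. c i (x + y) = c i x + c i y"
    "\<forall>x\<in>H. (\<forall>i<d. c i x = 0) \<longrightarrow> x = 0"
  shows "\<exists>B\<subseteq>H. indep B \<and> H \<subseteq> zspan B"
  using assms
proof (induction d arbitrary: H)
  case 0
  then have "H \<subseteq> {0}" by auto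
  then show ?case using indep_empty zero_zspan[of "{}"] by (intro exI[of _ "{}"]) auto
next
  case (Suc d)
  define H' where "H' = {y\<in>H. c d y = 0}"
  have addd: "\<forall>x\<in>H. \<forall>y\<in>H. c d (x + y) = c d x + c d y" using Suc.prems(2) by simp
  have zH': "zsub H'"
    unfolding zsub_def H'_def using zsubD[OF Suc.prems(1)] addH_zero[OF Suc.prems(1) addd]
      addH_neg[OF Suc.prems(1) addd] addd by auto
  have "\<exists>B\<subseteq>H'. indep B \<and> H' \<subseteq> zspan B"
  proof (rule Suc.IH[OF zH'])
    show "\<forall>i<d. \<forall>x\<in>H'. \<forall>y\<in>H'. c i (x + y) = c i x + c i y" using Suc.prems(2) unfolding H'_def by auto
    show "\<forall>x\<in>H'. (\<forall>i<d. c i x = 0) \<longrightarrow> x = 0"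
    proof (intro ballI impI)
      fix x assume x: "x \<in> H'" "\<forall>i<d. c i x = 0"
      then have "\<forall>i<Suc d. c i x = 0" unfolding H'_def using less_Suc_eq by auto
      then show "x = 0" using Suc.prems(3) x(1) unfolding H'_def by blast
    qed
  qed
  then obtain B' where B': "B' \<subseteq> H'" "indep B'" "H' \<subseteq> zspan B'" by blast
  have fB': "finite B'" using B'(2) by (simp add: indep_def)
  show ?case
  proof (cases "\<forall>y\<in>H. c d y = 0")
    case True
    then have "H = H'" unfolding H'_def by auto
    then show ?thesis using B' by auto
  next
    case False
    then obtain y0 where y0: "y0 \<in> H" "c d y0 \<noteq> 0" by blast
    define P where "P = (\<lambda>n::nat. n > 0 \<and> (\<exists>y\<in>H. c d y = int n))"
    have "P (nat \<bar>c d y0\<bar>)"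
    proof (cases "c d y0 > 0")
      case True then show ?thesis unfolding P_def using y0 by auto
    next
      case False
      then have "c d (- y0) = int (nat \<bar>c d y0\<bar>)" using addH_neg[OF Suc.prems(1) addd y0(1)] y0(2) by simp
      then show ?thesis unfolding P_def using y0 zsubD(3)[OF Suc.prems(1) y0(1)] by auto
    qed
    define k where "k = (LEAST n. P n)"
    have Pk: "P k" unfolding k_def by (rule LeastI) fact
    have kmin: "\<And>n. P n \<Longrightarrow> k \<le> n" unfolding k_def by (rule Least_le)
    obtain h where h: "h \<in> H" "c d h = int k" "k > 0" using Pk unfolding P_def by blast
    have hB': "h \<notin> B'" using B'(1) h unfolding H'_def by auto
    have span: "y \<in> zspan (insert h B')" if y: "y \<in> H" for y
    proof -
      define q where "q = c d y div int k"
      define y' where "y' = y - zsmul q h"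
      have y'H: "y' \<in> H" unfolding y'_def using zsub_diff[OF Suc.prems(1) y zsub_zsmul[OF Suc.prems(1) h(1)]] .
      have "c d (y' + zsmul q h) = c d y' + c d (zsmul q h)"
        using addd y'H zsub_zsmul[OF Suc.prems(1) h(1)] by blast
      then have "c d y = c d y' + q * int k" unfolding y'_def
        using addH_zsmul[OF Suc.prems(1) addd h(1)] h(2) by simp
      moreover have "c d y mod int k = c d y - int k * (c d y div int k)" by (simp add: minus_mult_div_eq_mod)
      ultimately have cy': "c d y' = c d y mod int k" unfolding q_def by (simp only: mult.commute)
      have "c d y' = 0"
      proof (rule ccontr)
        assume "c d y' \<noteq> 0"
        moreover have "0 \<le> c d y mod int k" using h(3) by simp
        ultimately have pos: "c d y' > 0" using cy' by linarith
        then have "P (nat (c d y'))" unfolding P_def using y'H by auto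
        then have "k \<le> nat (c d y')" by (rule kmin)
        moreover have "c d y mod int k < int k" using h(3) by simp
        then have "c d y' < int k" using cy' by linarith
        ultimately show False using pos by linarith
      qed
      then have "y' \<in> H'" unfolding H'_def using y'H by simp
      then have "y' \<in> zspan B'" using B'(3) by blast
      then have a: "y' \<in> zspan (insert h B')" using zspan_mono[of "insert h B'" B'] fB' by blast
      have b: "zsmul q h \<in> zspan (insert h B')"
        using zsub_zsmul[OF zsub_zspan zspan_in[of "insert h B'" h]] fB' by simp
      have "y = y' + zsmul q h" unfolding y'_def by simp
      then show ?thesis using zsubD(2)[OF zsub_zspan a b] by simp
    qed
    have ind: "indep (insert h B')"
      unfolding indep_def
    proof (intro conjI allI impI ballI)
      show "finite (insert h B')" using fB' by simp
    next
      fix m b assume m: "zcomb (insert h B') m = 0" and b: "b \<in> insert h B'"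
      have e: "zsmul (m h) h + zcomb B' m = 0" using m zcomb_insert[OF fB' hB'] by simp
      have zH': "zcomb B' m \<in> H'" using zcomb_in_zsub[OF zH' B'(1)] .
      then have c0: "c d (zcomb B' m) = 0" unfolding H'_def by simp
      have zH: "zcomb B' m \<in> H" using zH' unfolding H'_def by simp
      have "c d (zsmul (m h) h + zcomb B' m) = c d (zsmul (m h) h) + c d (zcomb B' m)"
        using addd zsub_zsmul[OF Suc.prems(1) h(1)] zH by blast
      then have "m h * int k = 0" using e c0 addH_zsmul[OF Suc.prems(1) addd h(1)] h(2)
        addH_zero[OF Suc.prems(1) addd] by simp
      then have mh: "m h = 0" using h(3) by simp
      then have "zcomb B' m = 0" using e by simp
      then have "\<forall>b\<in>B'. m b = 0" using B'(2) by (simp add: indep_def)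
      then show "m b = 0" using b mh by auto
    qed
    have "insert h B' \<subseteq> H" using h(1) B'(1) unfolding H'_def by auto
    then show ?thesis using ind span by blast
  qed
qed

lemma uniform_multiple:
  assumes "finite U" "U \<subseteq> rspan S"
  shows "\<exists>N>0. \<forall>u\<in>U. zsmul N u \<in> zspan S"
  using assms
proof (induction U rule: finite_induct)
  case empty then show ?case by (intro exI[of _ 1]) auto
next
  case (insert u U)
  then obtain N where N: "N > 0" "\<forall>v\<in>U. zsmul N v \<in> zspan S" by auto
  obtain n where n: "n > 0" "zsmul n u \<in> zspan S" using insert.prems unfolding rspan_def by blast
  have "\<forall>v\<in>insert u U. zsmul (n * N) v \<in> zspan S"
  proof
    fix v assume "v \<in> insert u U"
    then show "zsmul (n * N) v \<in> zspan S"
    proof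
      assume "v = u"
      then show ?thesis using zsub_zsmul[OF zsub_zspan n(2), of N] by (metis mult.commute zsmul_mult)
    next
      assume "v \<in> U"
      then show ?thesis using zsub_zsmul[OF zsub_zspan, of "zsmul N v" S n] N(2) by (simp add: zsmul_mult)
    qed
  qed
  then show ?case using N(1) n(1) by (intro exI[of _ "n * N"]) simp
qed

lemma torsion_free_zsmul:
  assumes "torsion_free (UNIV :: 'a::ab_group_add set)" "N > 0" "zsmul N (x::'a) = 0" shows "x = 0"
proof -
  have "nsmul (nat N) x = 0" using assms(2,3) by (simp add: zsmul_def)
  moreover have "nat N > 0" using assms(2) by simp
  ultimately show ?thesis using assms(1) unfolding torsion_free_def by blast
qed

lemma free_cover:
  fixes S1 :: "'a::ab_group_add set"
  assumes tf: "torsion_free (UNIV :: 'a set)" and S1: "indep S1" "rspan S1 = UNIV" and T: "finite (T :: 'a set)"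
  shows "\<exists>S. indep S \<and> rspan S = UNIV \<and> T \<subseteq> zspan S"
proof -
  have fS1: "finite S1" using S1(1) by (simp add: indep_def)
  define Y where "Y = zspan (T \<union> S1)"
  have zY: "zsub Y" unfolding Y_def by (rule zsub_zspan)
  obtain N where N: "N > 0" "\<forall>u\<in>T \<union> S1. zsmul N u \<in> zspan S1"
    using uniform_multiple[of "T \<union> S1" S1] T fS1 S1(2) by auto
  have zN: "zsub {y. zsmul N y \<in> zspan S1}"
    unfolding zsub_def using zsubD[OF zsub_zspan[of S1]] by (auto simp: zsmul_plus zsmul_neg)
  have YN: "\<And>y. y \<in> Y \<Longrightarrow> zsmul N y \<in> zspan S1"
    using zspan_sub[OF zN, of "T \<union> S1"] N(2) unfolding Y_def by blast
  define kap where "kap = (\<lambda>y. SOME m. zsmul N y = zcomb S1 m)"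
  have kap: "\<And>y. y \<in> Y \<Longrightarrow> zsmul N y = zcomb S1 (kap y)"
  proof -
    fix y assume "y \<in> Y"
    then have "\<exists>m. zsmul N y = zcomb S1 m" using YN unfolding zspan_def by blast
    then show "zsmul N y = zcomb S1 (kap y)" unfolding kap_def by (rule someI_ex)
  qed
  obtain e where e: "bij_betw e {0..<card S1} S1" using ex_bij_betw_nat_finite[OF fS1] by blast
  define c where "c = (\<lambda>i y. kap y (e i))"
  have "\<exists>B\<subseteq>Y. indep B \<and> Y \<subseteq> zspan B"
  proof (rule free_sub[OF zY, of "card S1" c])
    show "\<forall>i<card S1. \<forall>x\<in>Y. \<forall>y\<in>Y. c i (x + y) = c i x + c i y"
    proof (intro allI impI ballI)
      fix i x y assume i: "i < card S1" and xy: "x \<in> Y" "y \<in> Y"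
      have "x + y \<in> Y" using zsubD(2)[OF zY xy] .
      then have "zcomb S1 (kap (x + y)) = zsmul N (x + y)" using kap by simp
      also have "\<dots> = zcomb S1 (\<lambda>b. kap x b + kap y b)" using kap xy by (simp add: zsmul_plus zcomb_add)
      finally have "zcomb S1 (kap (x + y)) = zcomb S1 (\<lambda>b. kap x b + kap y b)" .
      moreover have "e i \<in> S1" using e i by (auto simp: bij_betw_def)
      ultimately have "kap (x + y) (e i) = kap x (e i) + kap y (e i)"
        using indep_coeff_eq[OF S1(1), of "kap (x + y)" "\<lambda>b. kap x b + kap y b" "e i"] by simp
      then show "c i (x + y) = c i x + c i y" unfolding c_def by simp
    qed
    show "\<forall>x\<in>Y. (\<forall>i<card S1. c i x = 0) \<longrightarrow> x = 0"
    proof (intro ballI impI)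
      fix x assume x: "x \<in> Y" "\<forall>i<card S1. c i x = 0"
      have "\<forall>b\<in>S1. kap x b = 0"
      proof
        fix b assume "b \<in> S1"
        then have "b \<in> e ` {0..<card S1}" using e by (simp add: bij_betw_def)
        then obtain i where "i < card S1" "b = e i" by auto
        then show "kap x b = 0" using x(2) unfolding c_def by simp
      qed
      then have "zsmul N x = 0" using kap[OF x(1)] zcomb_cong[of S1 "kap x" "\<lambda>_. 0"] by simp
      then show "x = 0" using torsion_free_zsmul[OF tf N(1)] by simp
    qed
  qed
  then obtain B where B: "B \<subseteq> Y" "indep B" "Y \<subseteq> zspan B" by blast
  have "S1 \<subseteq> rspan B" using B(3) zspan_in[of "T \<union> S1"] fS1 T zspan_rspan[of B] unfolding Y_def by blast
  then have "rspan B = UNIV" using rspan_trans[of S1 B] S1(2) by blast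
  moreover have "T \<subseteq> zspan B" using B(3) zspan_in[of "T \<union> S1"] fS1 T unfolding Y_def by blast
  ultimately show ?thesis using B(2) by blast
qed



section \<open>No small subgroups in the circle\<close>

lemma re_gt_half:
  assumes "norm (w::complex) = 1" "norm (w - 1) < 1" shows "Re w > 1/2"
proof -
  have a: "(Re w)\<^sup>2 + (Im w)\<^sup>2 = 1" using assms(1) cmod_power2[of w] by simp
  have "(norm (w - 1))\<^sup>2 < 1" using assms(2) by (simp add: power_less_one_iff abs_le_iff)
  then have "(Re w - 1)\<^sup>2 + (Im w)\<^sup>2 < 1" using cmod_power2[of "w - 1"] by simp
  then show ?thesis using a by (simp add: power2_eq_square algebra_simps)
qed

lemma no_small_subgroup:
  assumes "norm (z::complex) = 1" "\<And>n. norm (z ^ n - 1) < 1" shows "z = 1"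
proof (rule ccontr)
  assume nz: "z \<noteq> 1"
  define d where "d = norm (1 - z)"
  have d: "d > 0" using nz unfolding d_def by simp
  obtain N :: nat where N: "real N > 4 / d" using reals_Archimedean2 by blast
  have "(\<Sum>i<N. z ^ i) = (1 - z ^ N) / (1 - z)" using nz by (simp add: sum_gp_strict)
  then have "norm (\<Sum>i<N. z ^ i) \<le> 2 / d"
  proof -
    assume e: "(\<Sum>i<N. z ^ i) = (1 - z ^ N) / (1 - z)"
    have "norm (1 - z ^ N) \<le> norm (1::complex) + norm (z ^ N)" by (rule norm_triangle_ineq4)
    also have "\<dots> = 2" using assms(1) by (simp add: norm_power)
    finally have "norm (1 - z ^ N) \<le> 2" .
    then show ?thesis unfolding e d_def by (simp add: norm_divide divide_right_mono)
  qed
  moreover have "Re (\<Sum>i<N. z ^ i) \<ge> real N / 2"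
  proof -
    have "\<And>i. Re (z ^ i) \<ge> 1/2"
      using re_gt_half[of "z ^ _"] assms by (simp add: norm_power less_imp_le)
    then have "(\<Sum>i<N. Re (z ^ i)) \<ge> (\<Sum>i<N. 1/2)" by (intro sum_mono) auto
    then show ?thesis by (simp add: Re_sum)
  qed
  moreover have "Re (\<Sum>i<N. z ^ i) \<le> norm (\<Sum>i<N. z ^ i)" by (rule complex_Re_le_cmod)
  ultimately have "real N / 2 \<le> 2 / d" by linarith
  then have "real N \<le> 4 / d" by (simp add: field_simps)
  then show False using N by simp
qed

section \<open>Continuous characters of the real line\<close>

lemma additive_bounded_zero:
  fixes u :: "real \<Rightarrow> complex"
  assumes add: "\<And>s t. u (s + t) = u s + u t" and cont: "continuous_on UNIV u" and u1: "u 1 = 0"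
  shows "u t = 0"
proof -
  have u0: "u 0 = 0" using add[of 0 0] by simp
  have uneg: "u (- s) = - u s" for s using add[of s "-s"] u0 by (simp add: eq_neg_iff_add_eq_0 add.commute)
  have unat: "u (real n * s) = of_nat n * u s" for n s
    by (induction n) (auto simp: u0 add distrib_right algebra_simps)
  have unat1: "u (real n) = 0" for n using unat[of n 1] u1 by simp
  have uint: "u (of_int m) = 0" for m
  proof (cases "m \<ge> 0")
    case True
    then obtain n where "m = int n" using nonneg_int_cases by blast
    then show ?thesis using unat1[of n] by simp
  next
    case False
    then have e: "(of_int m :: real) = - real (nat (- m))" by simp
    show ?thesis unfolding e uneg unat1 by simp
  qed
  have "compact (u ` {0..1})"
    by (rule compact_continuous_image) (auto intro: continuous_on_subset[OF cont])
  then obtain a where a: "\<And>s. s \<in> {0..1} \<Longrightarrow> norm (u s) \<le> a"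
    using compact_imp_bounded[of "u ` {0..1}"] unfolding bounded_iff by blast
  have ub: "norm (u s) \<le> a" for s
  proof -
    have "s = frac s + of_int \<lfloor>s\<rfloor>" by (simp add: frac_def)
    then have "u s = u (frac s + of_int \<lfloor>s\<rfloor>)" by simp
    also have "\<dots> = u (frac s)" unfolding add uint by simp
    finally have "u s = u (frac s)" .
    moreover have "frac s \<in> {0..1}" using frac_lt_1[of s] by simp
    ultimately show ?thesis using a by simp
  qed
  show "u t = 0"
  proof (rule ccontr)
    assume "u t \<noteq> 0"
    then have p: "norm (u t) > 0" by simp
    obtain n :: nat where n: "real n > a / norm (u t)" using reals_Archimedean2 by blast
    have "norm (u (real n * t)) = real n * norm (u t)" using unat[of n t] by (simp add: norm_mult)
    also have "\<dots> > a" using n p by (simp add: field_simps)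
    finally show False using ub[of "real n * t"] by simp
  qed
qed

lemma circle_char_R:
  fixes \<phi> :: "real \<Rightarrow> complex"
  assumes cont: "continuous_on UNIV \<phi>" and hom: "\<And>s t. \<phi> (s + t) = \<phi> s * \<phi> t"
    and nz: "\<And>t. \<phi> t \<noteq> 0" and one: "\<phi> 1 = 1"
  shows "\<exists>k::int. \<forall>t. \<phi> t = cis (2 * pi * (of_int k * t))"
proof -
  obtain g where g: "continuous_on UNIV g" "\<And>t. \<phi> t = exp (g t)"
  proof -
    obtain g where "continuous_on UNIV g" "\<And>x. x \<in> UNIV \<Longrightarrow> \<phi> x = exp (g x)"
      using continuous_logarithm_on_contractible[OF cont contractible_UNIV] nz by blast
    then show ?thesis using that by blast
  qed
  define D where "D = (\<lambda>p::real \<times> real. g (fst p + snd p) - g (fst p) - g (snd p))"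
  have contD: "continuous_on UNIV D" unfolding D_def
    by (intro continuous_intros continuous_on_compose2[OF g(1)]) auto
  have Dint: "\<exists>n::int. D p = of_real (2 * pi * of_int n) * \<i>" for p
  proof -
    have "exp (D p) = \<phi> (fst p + snd p) / (\<phi> (fst p) * \<phi> (snd p))"
      unfolding D_def g(2) by (simp add: exp_diff)
    also have "\<dots> = 1" using hom nz by simp
    finally obtain n :: int where "Re (D p) = 0" "Im (D p) = of_int (2 * n) * pi"
      using exp_eq_1 by blast
    then have "D p = of_real (2 * pi * of_int n) * \<i>" by (simp add: complex_eq_iff)
    then show ?thesis by blast
  qed
  have "D constant_on UNIV"
  proof (rule continuous_discrete_range_constant[OF connected_UNIV contD])
    fix x :: "real \<times> real"
    show "\<exists>e>0. \<forall>y. y \<in> UNIV \<and> D y \<noteq> D x \<longrightarrow> e \<le> norm (D y - D x)"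
    proof (intro exI[of _ "2 * pi"] conjI allI impI)
      fix y assume y: "y \<in> UNIV \<and> D y \<noteq> D x"
      obtain n m :: int where nm: "D x = of_real (2 * pi * of_int n) * \<i>" "D y = of_real (2 * pi * of_int m) * \<i>"
        using Dint by metis
      then have "m \<noteq> n" using y by auto
      then have "1 \<le> \<bar>real_of_int m - real_of_int n\<bar>" by linarith
      then have "2 * pi * 1 \<le> 2 * pi * \<bar>real_of_int m - real_of_int n\<bar>" by simp
      also have "\<dots> = norm (D y - D x)"
      proof -
        have "D y - D x = of_real (2 * pi * (of_int m - of_int n)) * \<i>" unfolding nm
          by (simp add: algebra_simps)
        then show ?thesis by (simp only: norm_mult norm_of_real norm_ii mult_1_right) (simp add: abs_mult)
      qed
      finally show "2 * pi \<le> norm (D y - D x)" by simp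
    qed simp
  qed
  then have Dc: "D p = D (0, 0)" for p unfolding constant_on_def by (metis UNIV_I)
  define h where "h = (\<lambda>t. g t - g 0)"
  have hadd: "h (s + t) = h s + h t" for s t
    using Dc[of "(s, t)"] unfolding D_def h_def by (simp add: algebra_simps)
  have phi0: "\<phi> 0 = 1" using hom[of 0 0] nz[of 0] by simp
  have eg0: "exp (g 0) = 1" using g(2)[of 0] phi0 by simp
  have ph: "\<phi> t = exp (h t)" for t unfolding h_def using g(2)[of t] eg0 by (simp add: exp_diff)
  obtain k :: int where k: "Re (h 1) = 0" "Im (h 1) = of_int (2 * k) * pi"
    using ph[of 1] one exp_eq_1 by metis
  have h1: "h 1 = of_real (2 * pi * of_int k) * \<i>" using k by (simp add: complex_eq_iff)
  define u where "u = (\<lambda>t. h t - of_real t * h 1)"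
  have "u t = 0" for t
  proof (rule additive_bounded_zero)
    show "u (s + t) = u s + u t" for s t unfolding u_def using hadd by (simp add: algebra_simps)
    show "continuous_on UNIV u" unfolding u_def h_def by (intro continuous_intros g(1))
    show "u 1 = 0" unfolding u_def by simp
  qed
  then have "h t = of_real t * h 1" for t unfolding u_def by (metis eq_iff_diff_eq_0)
  then have "\<phi> t = cis (2 * pi * (of_int k * t))" for t
    unfolding ph h1 cis_conv_exp by (simp add: algebra_simps)
  then show ?thesis by blast
qed



lemma exists_basis_in:
  assumes fr: "finite_rank (UNIV :: 'a::ab_group_add set)" and A: "agroup_span A = (UNIV :: 'a set)"
  shows "\<exists>S\<subseteq>A. indep S \<and> rspan S = UNIV"
proof -
  obtain S0 :: "'a set" where S0: "finite S0" "\<forall>x. \<exists>n>0. nsmul n x \<in> agroup_span S0"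
    using fr unfolding finite_rank_def by blast
  obtain B where B: "finite B" "B \<subseteq> A" "S0 \<subseteq> zspan B"
    using finite_sub_zspan[OF S0(1), of A] A by blast
  obtain S where S: "S \<subseteq> B" "indep S" "B \<subseteq> rspan S" using indep_extract[OF B(1)] by blast
  have "zspan B \<subseteq> rspan S" using zspan_sub[OF zsub_rspan S(3)] .
  then have S0S: "S0 \<subseteq> rspan S" using B(3) by blast
  have "agroup_span S0 \<subseteq> zspan S0"
    using zsub_agroup_span[OF zsub_zspan[of S0]] zspan_in[OF S0(1)] by blast
  have "x \<in> rspan S" for x
  proof -
    obtain n where n: "n > 0" "nsmul n x \<in> agroup_span S0" using S0(2) by blast
    then have "zsmul (int n) x \<in> zspan S0" using \<open>agroup_span S0 \<subseteq> zspan S0\<close> by (auto simp: zsmul_of_nat)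
    then have "x \<in> rspan S0" unfolding rspan_def using n(1) by (intro CollectI exI[of _ "int n"]) simp
    then show ?thesis using rspan_trans[OF S0S] by blast
  qed
  then show ?thesis using S(1,2) B(2) by blast
qed

lemma agroup_span_UNIV: "agroup_span UNIV = UNIV"
  using agroup_span.gen by blast

lemma exists_basis:
  assumes fr: "finite_rank (UNIV :: 'a::ab_group_add set)"
  shows "\<exists>S::'a set. indep S \<and> rspan S = UNIV"
  using exists_basis_in[OF fr agroup_span_UNIV] by blast

lemma separate:
  assumes tf: "torsion_free (UNIV :: 'a::ab_group_add set)" and fr: "finite_rank (UNIV :: 'a set)"
    and x: "(x::'a) \<noteq> 0"
  shows "\<exists>g\<in>dual_group. g x \<noteq> 1"
proof -
  obtain S :: "'a set" where S: "indep S" "rspan S = UNIV" using exists_basis[OF fr] by blast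
  have fS: "finite S" using S(1) by (simp add: indep_def)
  obtain n m where n: "n > 0" "zsmul n x = zcomb S m" using S(2) unfolding rspan_def zspan_def by blast
  obtain b0 where b0: "b0 \<in> S" "m b0 \<noteq> 0"
  proof (rule ccontr)
    assume "\<not> thesis"
    then have "\<forall>b\<in>S. m b = 0" using that by blast
    then have "zcomb S m = 0" using zcomb_cong[of S m "\<lambda>_. 0"] by simp
    then have "x = 0" using torsion_free_zsmul[OF tf n(1)] n(2) by simp
    then show False using x by simp
  qed
  define r where "r = (\<lambda>b. if b = b0 then real_of_int n / (2 * real_of_int (m b0)) else 0)"
  define p where "p = ext S r"
  have "p x = (\<Sum>b\<in>S. real_of_int (m b) * r b) / real_of_int n" unfolding p_def by (rule ext_rep[OF S(1) n])
  also have "(\<Sum>b\<in>S. real_of_int (m b) * r b) = real_of_int (m b0) * (real_of_int n / (2 * real_of_int (m b0)))"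
  proof -
    have "(\<Sum>b\<in>S. real_of_int (m b) * r b) = (\<Sum>b\<in>S. if b = b0 then real_of_int (m b) * (real_of_int n / (2 * real_of_int (m b0))) else 0)"
      unfolding r_def by (rule sum.cong) auto
    also have "\<dots> = real_of_int (m b0) * (real_of_int n / (2 * real_of_int (m b0)))"
      using fS b0(1) by simp
    finally show ?thesis .
  qed
  finally have px: "p x = 1/2" using b0(2) n(1) by (simp add: field_simps)
  have "expG p \<in> dual_group" unfolding p_def by (rule expG_in[OF ext_additive[OF S]])
  moreover have "expG p x \<noteq> 1" unfolding expG_def px by simp
  ultimately show ?thesis by blast
qed

lemma eval_unique:
  assumes tf: "torsion_free (UNIV :: 'a::ab_group_add set)" and fr: "finite_rank (UNIV :: 'a set)"
    and e: "\<And>g. g \<in> dual_group \<Longrightarrow> g (y::'a) = g y'"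
  shows "y = y'"
proof (rule ccontr)
  assume "y \<noteq> y'"
  then have "y - y' \<noteq> 0" by simp
  then obtain g where g: "g \<in> dual_group" "g (y - y') \<noteq> 1" using separate[OF tf fr] by blast
  have "g (y - y') = g y * g (- y')" using dgD(2)[OF g(1), of y "- y'"] by simp
  also have "\<dots> = 1" using e[OF g(1)] dg_neg[OF g(1), of y'] dg_nz[OF g(1), of y'] by simp
  finally show False using g(2) by simp
qed

section \<open>Continuous characters of G are evaluations\<close>

lemma dg_prod: "(\<And>s. s \<in> S' \<Longrightarrow> F s \<in> dual_group) \<Longrightarrow> (\<lambda>c. \<Prod>s\<in>S'. F s c) \<in> dual_group"
proof (induction S' rule: infinite_finite_induct)
  case (insert b B)
  have "(\<lambda>c. \<Prod>s\<in>B. F s c) \<in> dual_group" using insert by blast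
  then have "(\<lambda>c. F b c * (\<Prod>s\<in>B. F s c)) \<in> dual_group" using dg_mult insert.prems by blast
  then show ?case using insert.hyps by simp
qed (auto simp: dg_one)

lemma chi_prod:
  assumes mult: "\<And>g h. g \<in> dual_group \<Longrightarrow> h \<in> dual_group \<Longrightarrow> ch (\<lambda>c. g c * h c) = ch g * ch h"
    and one: "ch (\<lambda>c. 1) = 1"
    and F: "\<And>s. s \<in> S' \<Longrightarrow> F s \<in> dual_group"
  shows "ch (\<lambda>c. \<Prod>s\<in>S'. F s c) = (\<Prod>s\<in>S'. ch (F s))"
  using F
proof (induction S' rule: infinite_finite_induct)
  case (infinite A) then show ?case using one by simp
next
  case empty then show ?case using one by simp
next
  case (insert a A)
  have inG: "(\<lambda>c. \<Prod>s\<in>A. F s c) \<in> dual_group"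
    using insert.prems by (intro dg_prod) blast
  have "ch (\<lambda>c. \<Prod>s\<in>insert a A. F s c) = ch (\<lambda>c. F a c * (\<Prod>s\<in>A. F s c))"
    using insert.hyps by simp
  also have "\<dots> = ch (F a) * ch (\<lambda>c. \<Prod>s\<in>A. F s c)" using mult[OF insert.prems[of a] inG] by simp
  finally show ?case using insert by simp
qed

lemma pontryagin:
  fixes ch :: "('a::ab_group_add \<Rightarrow> complex) \<Rightarrow> complex"
  assumes tf: "torsion_free (UNIV :: 'a set)" and fr: "finite_rank (UNIV :: 'a set)"
    and cont: "continuous_on dual_group ch"
    and mult: "\<And>g h. g \<in> dual_group \<Longrightarrow> h \<in> dual_group \<Longrightarrow> ch (\<lambda>c. g c * h c) = ch g * ch h"
    and nrm: "\<And>g. g \<in> dual_group \<Longrightarrow> norm (ch g) = 1"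
  shows "\<exists>y. \<forall>g\<in>dual_group. g y = ch g"
proof -
  define one :: "'a \<Rightarrow> complex" where "one = (\<lambda>c. 1)"
  have oneG: "one \<in> dual_group" unfolding one_def by (rule dg_one)
  have chi1: "ch one = 1"
  proof -
    have "ch one = ch one * ch one" using mult[OF oneG oneG] unfolding one_def by simp
    moreover have "ch one \<noteq> 0" using nrm[OF oneG] by auto
    ultimately show ?thesis by simp
  qed
  obtain U where U: "open U" "U \<inter> dual_group = ch -` ball 1 1 \<inter> dual_group"
    using cont unfolding continuous_on_open_invariant by (meson open_ball)
  have oneU: "one \<in> U" using U(2) chi1 oneG by auto
  have "openin (product_topology (\<lambda>i. euclidean) UNIV) U" using U(1) by (simp add: open_fun_def)
  then obtain X where X: "one \<in> (\<Pi>\<^sub>E i\<in>UNIV. X i)" "\<And>i. openin euclidean (X i)"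
      "finite {i. X i \<noteq> topspace euclidean}" "(\<Pi>\<^sub>E i\<in>UNIV. X i) \<subseteq> U"
    using product_topology_open_contains_basis[OF _ oneU] by blast
  define T where "T = {i. X i \<noteq> UNIV}"
  have fT: "finite T" using X(3) unfolding T_def by simp
  have near: "norm (ch h - 1) < 1" if h: "h \<in> dual_group" "\<And>t. t \<in> T \<Longrightarrow> h t = 1" for h
  proof -
    have "h \<in> (\<Pi>\<^sub>E i\<in>UNIV. X i)"
    proof (unfold PiE_UNIV_domain, rule Pi_I)
      fix i
      show "h i \<in> X i"
      proof (cases "i \<in> T")
        case True then show ?thesis using h(2) X(1) unfolding one_def PiE_UNIV_domain by auto
      next
        case False then show ?thesis unfolding T_def by auto
      qed
    qed
    then have "h \<in> U \<inter> dual_group" using X(4) h(1) by blast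
    then have "ch h \<in> ball 1 1" using U(2) by blast
    then show ?thesis by (simp add: dist_norm norm_minus_commute)
  qed
  have kill: "ch h = 1" if h: "h \<in> dual_group" "\<And>t. t \<in> T \<Longrightarrow> h t = 1" for h
  proof (rule no_small_subgroup[OF nrm[OF h(1)]])
    fix n
    have pw: "(\<lambda>c. h c ^ n) \<in> dual_group \<and> ch (\<lambda>c. h c ^ n) = ch h ^ n"
    proof (induction n)
      case 0 then show ?case using chi1 oneG unfolding one_def by simp
    next
      case (Suc n)
      have "ch (\<lambda>c. h c ^ Suc n) = ch (\<lambda>c. h c * h c ^ n)" by simp
      also have "\<dots> = ch h * ch (\<lambda>c. h c ^ n)" using mult[OF h(1)] Suc by blast
      finally show ?case using Suc dg_pow[OF h(1), of "Suc n"] by simp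
    qed
    have "norm (ch (\<lambda>c. h c ^ n) - 1) < 1" using near[of "\<lambda>c. h c ^ n"] pw h(2) by simp
    then show "norm (ch h ^ n - 1) < 1" using pw by simp
  qed
  obtain S1 :: "'a set" where S1: "indep S1" "rspan S1 = UNIV" using exists_basis[OF fr] by blast
  obtain S where S: "indep S" "rspan S = UNIV" "T \<subseteq> zspan S" using free_cover[OF tf S1 fT] by blast
  have fS: "finite S" using S(1) by (simp add: indep_def)
  have killS: "ch h = 1" if h: "h \<in> dual_group" "\<And>s. s \<in> S \<Longrightarrow> h s = 1" for h
  proof (rule kill[OF h(1)])
    fix t assume "t \<in> T"
    then obtain m where "t = zcomb S m" using S(3) unfolding zspan_def by blast
    moreover have "h (zcomb S m) = cis (2 * pi * (\<Sum>b\<in>S. of_int (m b) * 0))"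
      by (rule dg_zcomb[OF h(1)]) (simp add: h(2))
    ultimately show "h t = 1" by simp
  qed
  define e where "e = (\<lambda>s. ext S (\<lambda>b. if b = s then 1 else 0))"
  have eadd: "e s \<in> lie_alg" for s unfolding e_def by (rule ext_additive[OF S(1,2)])
  have tadd: "(\<lambda>c. t * e s c) \<in> lie_alg" for t s using lie_algD[OF eadd] by (simp add: lie_alg_def algebra_simps)
  have phiG: "expG (\<lambda>c. t * e s c) \<in> dual_group" for t s by (rule expG_in[OF tadd])
  have "\<exists>k::int. \<forall>t. ch (expG (\<lambda>c. t * e s c)) = cis (2 * pi * (of_int k * t))" if s: "s \<in> S" for s
  proof (rule circle_char_R)
    have "continuous_on UNIV (\<lambda>t. expG (\<lambda>c. t * e s c))"
      unfolding expG_def cis_conv_exp by (intro continuous_on_coordinatewise_then_product continuous_intros)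
    then show "continuous_on UNIV (\<lambda>t. ch (expG (\<lambda>c. t * e s c)))"
      by (rule continuous_on_compose2[OF cont]) (use phiG in blast)
    show "ch (expG (\<lambda>c. (a + b) * e s c)) = ch (expG (\<lambda>c. a * e s c)) * ch (expG (\<lambda>c. b * e s c))" for a b
    proof -
      have "expG (\<lambda>c. (a + b) * e s c) = (\<lambda>c. expG (\<lambda>c. a * e s c) c * expG (\<lambda>c. b * e s c) c)"
        unfolding expG_def by (simp add: cis_mult algebra_simps)
      then show ?thesis using mult[OF phiG phiG] by simp
    qed
    show "ch (expG (\<lambda>c. t * e s c)) \<noteq> 0" for t using nrm[OF phiG[of t s]] by auto
    show "ch (expG (\<lambda>c. 1 * e s c)) = 1"
    proof (rule killS[OF phiG])
      fix s' assume "s' \<in> S"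
      then have "e s s' \<in> {0, 1}" unfolding e_def using ext_basis[OF S(1)] by simp
      then show "expG (\<lambda>c. 1 * e s c) s' = 1" unfolding expG_def by auto
    qed
  qed
  then obtain k :: "'a \<Rightarrow> int" where k: "\<And>s t. s \<in> S \<Longrightarrow> ch (expG (\<lambda>c. t * e s c)) = cis (2 * pi * (of_int (k s) * t))"
    by metis
  show ?thesis
  proof (intro exI[of _ "zcomb S k"] ballI)
    fix g :: "'a \<Rightarrow> complex" assume g: "g \<in> dual_group"
    define r where "r = (\<lambda>s. tau (g s))"
    have gr: "g s = cis (2 * pi * r s)" for s unfolding r_def using cis_tau[OF dgD(1)[OF g]] by simp
    define p where "p = ext S r"
    have padd: "p \<in> lie_alg" unfolding p_def by (rule ext_additive[OF S(1,2)])
    define E where "E = expG p"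
    have EG: "E \<in> dual_group" unfolding E_def by (rule expG_in[OF padd])
    define h where "h = (\<lambda>c. g c * cnj (E c))"
    have hG: "h \<in> dual_group" unfolding h_def by (rule dg_mult[OF g dg_cnj[OF EG]])
    have "ch h = 1"
    proof (rule killS[OF hG])
      fix s assume s: "s \<in> S"
      have "E s = g s" unfolding E_def expG_def p_def ext_basis[OF S(1) s] gr ..
      then show "h s = 1" unfolding h_def using dg_cnj_mult[OF g, of s] by (simp add: mult.commute)
    qed
    have "g = (\<lambda>c. E c * h c)"
    proof
      fix c
      have "E c * cnj (E c) = 1" using dg_cnj_mult[OF EG, of c] by (simp add: mult.commute)
      then show "g c = E c * h c" unfolding h_def by (metis mult.assoc mult.commute mult.right_neutral)
    qed
    then have "ch g = ch (\<lambda>c. E c * h c)" by (rule arg_cong)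
    also have "\<dots> = ch E * ch h" by (rule mult[OF EG hG])
    also have "\<dots> = ch E" using \<open>ch h = 1\<close> by simp
    also have "E = (\<lambda>c. \<Prod>s\<in>S. expG (\<lambda>c. r s * e s c) c)"
    proof
      fix c
      have "p c = (\<Sum>s\<in>S. r s * e s c)" unfolding p_def e_def by (rule ext_linear[OF S(1,2)])
      then have "E c = cis (2 * pi * (\<Sum>s\<in>S. r s * e s c))"
        unfolding E_def expG_def by simp
      also have "\<dots> = (\<Prod>s\<in>S. cis (2 * pi * (r s * e s c)))" by (simp add: cis_sum sum_distrib_left)
      finally show "E c = (\<Prod>s\<in>S. expG (\<lambda>c. r s * e s c) c)" unfolding expG_def .
    qed
    also have "ch (\<lambda>c. \<Prod>s\<in>S. expG (\<lambda>c. r s * e s c) c) = (\<Prod>s\<in>S. ch (expG (\<lambda>c. r s * e s c)))"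
      by (rule chi_prod[OF mult]) (use chi1 phiG in \<open>auto simp: one_def\<close>)
    also have "\<dots> = (\<Prod>s\<in>S. cis (2 * pi * (of_int (k s) * r s)))" using k by simp
    also have "\<dots> = cis (2 * pi * (\<Sum>s\<in>S. of_int (k s) * r s))" by (simp add: cis_sum sum_distrib_left)
    also have "\<dots> = g (zcomb S k)" using dg_zcomb[OF g, of S r k] gr by simp
    finally show "g (zcomb S k) = ch g" by simp
  qed
qed

lemma dual_end_spec:
  assumes tf: "torsion_free (UNIV :: 'a::ab_group_add set)" and fr: "finite_rank (UNIV :: 'a set)"
    and f: "cont_end (f :: ('a \<Rightarrow> complex) \<Rightarrow> ('a \<Rightarrow> complex))" and g: "g \<in> dual_group"
  shows "g (dual_end f c) = f g c"
proof -
  have fG: "f ` dual_group \<subseteq> dual_group" and fm: "\<And>g h. g \<in> dual_group \<Longrightarrow> h \<in> dual_group \<Longrightarrow> f (\<lambda>c. g c * h c) = (\<lambda>c. f g c * f h c)"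
    and fc: "continuous_on dual_group f" using f unfolding cont_end_def by auto
  have "\<exists>y. \<forall>g\<in>dual_group. g y = f g c"
  proof (rule pontryagin[OF tf fr])
    show "continuous_on dual_group (\<lambda>g. f g c)"
      by (rule continuous_on_compose2[OF continuous_on_product_coordinates fc]) simp
    show "f (\<lambda>c. g c * h c) c = f g c * f h c" if "g \<in> dual_group" "h \<in> dual_group" for g h
      using fm[OF that] by simp
    show "norm (f g c) = 1" if "g \<in> dual_group" for g using fG that dgD(1) by blast
  qed
  then have "\<exists>!y. \<forall>g\<in>dual_group. g y = f g c" using eval_unique[OF tf fr] by metis
  then have "\<forall>g\<in>dual_group. g (dual_end f c) = f g c" unfolding dual_end_def by (rule theI')
  then show ?thesis using g by blast
qed



theorem theorem4p6:
  fixes \<rho> :: "'m::monoid_mult \<Rightarrow> ('x::ab_group_add \<Rightarrow> complex) \<Rightarrow> ('x \<Rightarrow> complex)"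
    and A :: "'x set" and C :: real
  assumes "finitely_generated_monoid (UNIV :: 'm set)"
    and "torsion_free (UNIV :: 'x set)"
    and "finite_rank (UNIV :: 'x set)"
    and "endo_action \<rho>"
    and "rho_basis \<rho> A"
    and "C > 0"
  shows "\<exists>\<epsilon>>0. ballA A \<epsilon> \<subseteq> expG ` ballA_star A C"
proof -
  note fg = assms(1) and tf = assms(2) and fr = assms(3) and act = assms(4) and rb = assms(5) and Cpos = assms(6)
  have ce: "cont_end (\<rho> \<gamma>)" for \<gamma> using act unfolding endo_action_def by blast
  have rho_comp: "\<And>\<gamma> \<delta> g. g \<in> dual_group \<Longrightarrow> \<rho> (\<gamma> * \<delta>) g = \<rho> \<gamma> (\<rho> \<delta> g)"
    using act unfolding endo_action_def by blast
  have rho_one: "\<And>g. g \<in> dual_group \<Longrightarrow> \<rho> 1 g = g" using act unfolding endo_action_def by blast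
  have rhoG: "g \<in> dual_group \<Longrightarrow> \<rho> \<gamma> g \<in> dual_group" for g \<gamma> using ce[of \<gamma>] unfolding cont_end_def by blast
  define M where "M = (\<lambda>\<gamma>. dual_end (\<rho> \<gamma>))"
  have spec: "g \<in> dual_group \<Longrightarrow> g (M \<gamma> c) = \<rho> \<gamma> g c" for g \<gamma> c
    unfolding M_def by (rule dual_end_spec[OF tf fr ce])
  have Madd: "M \<gamma> (x + y) = M \<gamma> x + M \<gamma> y" for \<gamma> x y
  proof (rule eval_unique[OF tf fr])
    fix g :: "'x \<Rightarrow> complex" assume g: "g \<in> dual_group"
    have "g (M \<gamma> (x + y)) = \<rho> \<gamma> g (x + y)" by (rule spec[OF g])
    also have "\<dots> = \<rho> \<gamma> g x * \<rho> \<gamma> g y" by (rule dgD(2)[OF rhoG[OF g]])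
    also have "\<dots> = g (M \<gamma> x + M \<gamma> y)" using spec[OF g] dgD(2)[OF g] by simp
    finally show "g (M \<gamma> (x + y)) = g (M \<gamma> x + M \<gamma> y)" .
  qed
  have Mcomp: "M (\<gamma> * \<delta>) c = M \<delta> (M \<gamma> c)" for \<gamma> \<delta> c
  proof (rule eval_unique[OF tf fr])
    fix g :: "'x \<Rightarrow> complex" assume g: "g \<in> dual_group"
    have "g (M (\<gamma> * \<delta>) c) = \<rho> \<gamma> (\<rho> \<delta> g) c" using spec[OF g] rho_comp[OF g] by simp
    also have "\<dots> = \<rho> \<delta> g (M \<gamma> c)" using spec[OF rhoG[OF g]] by simp
    also have "\<dots> = g (M \<delta> (M \<gamma> c))" using spec[OF g] by simp
    finally show "g (M (\<gamma> * \<delta>) c) = g (M \<delta> (M \<gamma> c))" .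
  qed
  have Mone: "M 1 c = c" for c
    by (rule eval_unique[OF tf fr]) (simp add: spec rho_one)
  have Aspan: "agroup_span A = UNIV" and "\<exists>F. finite F \<and> A = (\<Union>\<gamma>. dual_end (\<rho> \<gamma>) ` F)"
    using rb unfolding rho_basis_def by auto
  then obtain F where F: "finite F" "A = (\<Union>\<gamma>. M \<gamma> ` F)" unfolding M_def by blast
  have Aclosed: "a \<in> A \<Longrightarrow> M \<gamma> a \<in> A" for a \<gamma>
  proof -
    assume "a \<in> A"
    then obtain \<delta> f where "f \<in> F" "a = M \<delta> f" using F(2) by blast
    then have "M \<gamma> a = M (\<delta> * \<gamma>) f" using Mcomp by simp
    then show ?thesis using F(2) \<open>f \<in> F\<close> by blast
  qed
  obtain S where S: "S \<subseteq> A" "indep S" "rspan S = UNIV" using exists_basis_in[OF fr Aspan] by blast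
  have fS: "finite S" using S(2) by (simp add: indep_def)
  obtain Gen :: "'m set" where Gen: "finite Gen" "monoid_span Gen = UNIV"
    using fg unfolding finitely_generated_monoid_def by blast
  define Q where "Q = F \<union> (\<Union>\<gamma>\<in>Gen. M \<gamma> ` S)"
  have fQ: "finite Q" unfolding Q_def using F(1) Gen(1) fS by simp
  have "\<forall>q. \<exists>nm. fst nm > 0 \<and> zsmul (fst nm) q = zcomb S (snd nm)"
    using S(3) unfolding rspan_def zspan_def by fastforce
  then obtain nm where nm: "\<And>q. fst (nm q) > 0" "\<And>q. zsmul (fst (nm q)) q = zcomb S (snd (nm q))"
    by metis
  define K where "K = (\<Sum>q\<in>Q. real_of_int (fst (nm q)) + (\<Sum>s\<in>S. \<bar>real_of_int (snd (nm q) s)\<bar>))"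
  have Kq: "real_of_int (fst (nm q)) + (\<Sum>s\<in>S. \<bar>real_of_int (snd (nm q) s)\<bar>) \<le> K" if "q \<in> Q" for q
    unfolding K_def
  proof (rule member_le_sum[OF that _ fQ])
    fix x show "0 \<le> real_of_int (fst (nm x)) + (\<Sum>s\<in>S. \<bar>real_of_int (snd (nm x) s)\<bar>)"
      using nm(1)[of x] by (simp add: sum_nonneg)
  qed
  have K0: "K \<ge> 0" unfolding K_def using nm(1) by (intro sum_nonneg) (simp add: sum_nonneg less_imp_le)
  define \<epsilon> where "\<epsilon> = min C (min (1/4) (1 / (K + 1)))"
  have epos: "\<epsilon> > 0" unfolding \<epsilon>_def using Cpos K0 by simp
  have eC: "\<epsilon> \<le> C" unfolding \<epsilon>_def by simp
  have eK: "K * \<epsilon> < 1"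
  proof -
    have "K * \<epsilon> \<le> K * (1 / (K + 1))" unfolding \<epsilon>_def using K0 by (intro mult_left_mono) auto
    also have "\<dots> < 1" using K0 by (simp add: field_simps)
    finally show ?thesis .
  qed
  define B' where "B' = {g \<in> dual_group. \<forall>a\<in>A. \<bar>tau (g a)\<bar> < \<epsilon>}"
  define P where "P = (\<lambda>g. ext S (\<lambda>s. tau (g s)))"
  have Padd: "P g \<in> lie_alg" for g unfolding P_def by (rule ext_additive[OF S(2,3)])
  have Pbasis: "s \<in> S \<Longrightarrow> P g s = tau (g s)" for g s unfolding P_def by (rule ext_basis[OF S(2)])
  have key: "P g q = tau (g q)" if g: "g \<in> B'" and q: "q \<in> Q" and tq: "\<bar>tau (g q)\<bar> < \<epsilon>" for g q
  proof -
    define n where "n = fst (nm q)"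
    define m where "m = snd (nm q)"
    have n: "n > 0" "zsmul n q = zcomb S m" unfolding n_def m_def using nm by auto
    have gG: "g \<in> dual_group" and gA: "\<And>a. a \<in> A \<Longrightarrow> \<bar>tau (g a)\<bar> < \<epsilon>" using g unfolding B'_def by auto
    have gcis: "g x = cis (2 * pi * tau (g x))" for x using cis_tau[OF dgD(1)[OF gG]] by simp
    have e1: "real_of_int n * P g q = (\<Sum>s\<in>S. real_of_int (m s) * tau (g s))"
    proof -
      have "real_of_int n * P g q = P g (zsmul n q)" by (simp add: additive_zsmul[OF Padd])
      also have "\<dots> = (\<Sum>s\<in>S. real_of_int (m s) * P g s)" unfolding n(2) by (rule additive_zcomb[OF Padd])
      also have "\<dots> = (\<Sum>s\<in>S. real_of_int (m s) * tau (g s))" using Pbasis by simp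
      finally show ?thesis .
    qed
    have "cis (2 * pi * (real_of_int n * tau (g q))) = g (zsmul n q)"
      using dg_cis_zsmul[OF gG gcis[of q]] by simp
    also have "\<dots> = cis (2 * pi * (\<Sum>s\<in>S. real_of_int (m s) * tau (g s)))"
      unfolding n(2) by (rule dg_zcomb[OF gG gcis])
    finally have "real_of_int n * tau (g q) - (\<Sum>s\<in>S. real_of_int (m s) * tau (g s)) \<in> \<int>"
      by (rule cis_eq_int)
    then have I: "real_of_int n * tau (g q) - real_of_int n * P g q \<in> \<int>" using e1 by simp
    have b1: "\<bar>real_of_int n * P g q\<bar> \<le> (\<Sum>s\<in>S. \<bar>real_of_int (m s)\<bar>) * \<epsilon>"
    proof -
      have "\<bar>real_of_int n * P g q\<bar> \<le> (\<Sum>s\<in>S. \<bar>real_of_int (m s) * tau (g s)\<bar>)" unfolding e1 by (rule sum_abs)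
      also have "\<dots> \<le> (\<Sum>s\<in>S. \<bar>real_of_int (m s)\<bar> * \<epsilon>)"
      proof (rule sum_mono)
        fix s assume "s \<in> S"
        then have "\<bar>tau (g s)\<bar> \<le> \<epsilon>" using gA S(1) by (simp add: less_imp_le subset_iff)
        then show "\<bar>real_of_int (m s) * tau (g s)\<bar> \<le> \<bar>real_of_int (m s)\<bar> * \<epsilon>"
          by (simp add: abs_mult mult_left_mono)
      qed
      finally show ?thesis by (simp add: sum_distrib_right)
    qed
    have b2: "\<bar>real_of_int n * tau (g q)\<bar> \<le> real_of_int n * \<epsilon>"
      using tq n(1) by (simp add: abs_mult less_imp_le mult_left_mono)
    have "(real_of_int n + (\<Sum>s\<in>S. \<bar>real_of_int (m s)\<bar>)) * \<epsilon> \<le> K * \<epsilon>"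
      using Kq[OF q] epos unfolding n_def m_def by (intro mult_right_mono) auto
    then have "\<bar>real_of_int n * tau (g q) - real_of_int n * P g q\<bar> < 1" using b1 b2 eK
      by (simp add: distrib_right)
    then have "real_of_int n * tau (g q) - real_of_int n * P g q = 0" using int_small_zero[OF I] by blast
    then show ?thesis using n(1) by (simp add: right_diff_distrib[symmetric])
  qed
  have inv: "\<rho> \<gamma> g \<in> B'" if g: "g \<in> B'" for g \<gamma>
  proof -
    have gG: "g \<in> dual_group" using g unfolding B'_def by auto
    have "\<bar>tau (\<rho> \<gamma> g a)\<bar> < \<epsilon>" if a: "a \<in> A" for a
      using g Aclosed[OF a, of \<gamma>] spec[OF gG, of \<gamma> a] unfolding B'_def by auto
    then show ?thesis unfolding B'_def using rhoG[OF gG] by blast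
  qed
  have main: "\<forall>g\<in>B'. \<forall>x. P (\<rho> \<gamma> g) x = P g (M \<gamma> x)" if "\<gamma> \<in> monoid_span Gen" for \<gamma>
    using that
  proof (induction \<gamma> rule: monoid_span.induct)
    case one
    show ?case using rho_one Mone unfolding B'_def by simp
  next
    case (gen \<gamma>)
    show ?case
    proof (intro ballI allI)
      fix g x assume g: "g \<in> B'"
      have gG: "g \<in> dual_group" using g unfolding B'_def by auto
      show "P (\<rho> \<gamma> g) x = P g (M \<gamma> x)"
      proof (rule additive_unique[OF S(3) Padd])
        show "(\<lambda>x. P g (M \<gamma> x)) \<in> lie_alg"
          using lie_algD[OF Padd[of g]] Madd unfolding lie_alg_def by simp
      next
        fix s assume s: "s \<in> S"
        have MsA: "M \<gamma> s \<in> A" using Aclosed S(1) s by blast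
        have MsQ: "M \<gamma> s \<in> Q" unfolding Q_def using gen s by blast
        have "P (\<rho> \<gamma> g) s = tau (\<rho> \<gamma> g s)" by (rule Pbasis[OF s])
        also have "\<dots> = tau (g (M \<gamma> s))" using spec[OF gG] by simp
        also have "\<dots> = P g (M \<gamma> s)" using key[OF g MsQ] g MsA unfolding B'_def by simp
        finally show "P (\<rho> \<gamma> g) s = P g (M \<gamma> s)" .
      qed
    qed
  next
    case (mult \<gamma> \<delta>)
    show ?case
    proof (intro ballI allI)
      fix g x assume g: "g \<in> B'"
      have gG: "g \<in> dual_group" using g unfolding B'_def by auto
      have "P (\<rho> (\<gamma> * \<delta>) g) x = P (\<rho> \<gamma> (\<rho> \<delta> g)) x" using rho_comp[OF gG] by simp
      also have "\<dots> = P (\<rho> \<delta> g) (M \<gamma> x)" using mult.IH(1) inv[OF g] by blast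
      also have "\<dots> = P g (M \<delta> (M \<gamma> x))" using mult.IH(2) g by blast
      also have "\<dots> = P g (M (\<gamma> * \<delta>) x)" using Mcomp by simp
      finally show "P (\<rho> (\<gamma> * \<delta>) g) x = P g (M (\<gamma> * \<delta>) x)" .
    qed
  qed
  have main': "P (\<rho> \<gamma> g) x = P g (M \<gamma> x)" if "g \<in> B'" for \<gamma> g x
    using main[of \<gamma>] Gen(2) that by blast
  show ?thesis
  proof (intro exI[of _ \<epsilon>] conjI epos subsetI)
    fix g assume gb: "g \<in> ballA A \<epsilon>"
    have gG: "g \<in> dual_group" using gb unfolding ballA_def by simp
    have sup: "(SUP c\<in>A. ereal (delta_circ (g c))) < ereal \<epsilon>" using gb unfolding ballA_def by simp
    have dtau: "delta_circ (g c) = \<bar>tau (g c)\<bar>" for c by (rule delta_circ_tau[OF dgD(1)[OF gG]])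
    have gA: "\<bar>tau (g a)\<bar> < \<epsilon>" if a: "a \<in> A" for a
    proof -
      have "ereal (delta_circ (g a)) \<le> (SUP c\<in>A. ereal (delta_circ (g c)))" by (rule SUP_upper[OF a])
      then have "ereal (delta_circ (g a)) < ereal \<epsilon>" using sup by (rule order.strict_trans1)
      then show ?thesis using dtau by simp
    qed
    have gB: "g \<in> B'" unfolding B'_def using gG gA by blast
    define p where "p = P g"
    have pA: "p a = tau (g a)" if a: "a \<in> A" for a
    proof -
      obtain \<gamma> f where f: "f \<in> F" "a = M \<gamma> f" using a F(2) by blast
      have fQ: "f \<in> Q" unfolding Q_def using f(1) by blast
      have "p a = P (\<rho> \<gamma> g) f" unfolding p_def f(2) using main'[OF gB] by simp
      also have "\<dots> = tau (\<rho> \<gamma> g f)"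
      proof (rule key[OF inv[OF gB] fQ])
        show "\<bar>tau (\<rho> \<gamma> g f)\<bar> < \<epsilon>" using gA[OF a] spec[OF gG, of \<gamma> f] f(2) by simp
      qed
      also have "\<dots> = tau (g a)" using spec[OF gG, of \<gamma> f] f(2) by simp
      finally show ?thesis .
    qed
    have "expG p = g"
    proof (rule dg_eq_agroup_span[OF expG_in gG _ Aspan])
      show "p \<in> lie_alg" unfolding p_def by (rule Padd)
    next
      fix a assume "a \<in> A"
      then show "expG p a = g a" unfolding expG_def pA[OF \<open>a \<in> A\<close>] using cis_tau[OF dgD(1)[OF gG]] by simp
    qed
    moreover have "p \<in> ballA_star A C"
    proof -
      have "(SUP a\<in>A. ereal \<bar>p a\<bar>) = (SUP a\<in>A. ereal (delta_circ (g a)))"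
        using pA dtau by (intro SUP_cong) auto
      also have "\<dots> < ereal \<epsilon>" by (rule sup)
      also have "\<dots> \<le> ereal C" using eC by simp
      finally show ?thesis unfolding ballA_star_def p_def using Padd by simp
    qed
    ultimately show "g \<in> expG ` ballA_star A C" by blast
  qed
qed

end
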